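(* Let $p=q=3$ and let $\mathcal V_{\mathrm{phys}}$, $\Psi_{lmn}$ and the operators $\hat A_{ij},\hat B_{ij},\hat C_{ij}$ be as in the context. Let $(\cdot,\cdot)$ be an inner product on $\mathcal V_{\mathrm{phys}}$ with respect to which every $\hat A_{ij},\hat B_{ij},\hat C_{ij}$ (acting on $\mathcal V_{\mathrm{phys}}$) is symmetric. Then there is a constant $r>0$ such that $(\Psi_{lmn},\Psi_{l'm'n'})=r(2l+1)\delta_{ll'}\delta_{mm'}\delta_{nn'}$ for all indices.
   Context: On smooth functions of $(\boldsymbol u,\boldsymbol v)\in\mathbb{R}^3\times\mathbb{R}^3$ define $\hat A_{ij}=-i(u_i\partial_{u_j}-u_j\partial_{u_i})$, $\hat B_{ij}=-i(v_i\partial_{v_j}-v_j\partial_{v_i})$, $\hat C_{ij}=u_iv_j+\partial_{u_i}\partial_{v_j}$ for $1\le i,j\le3$. With $u=|\boldsymbol u|$, $v=|\boldsymbol v|$, let $\Psi_{lmn}=j_l(uv)Y_{lm}(\boldsymbol u/u)Y_{ln}(\boldsymbol v/v)$ for integers $l\ge0$, $|m|\le l$, $|n|\le l$, where $j_l$ is the spherical Bessel function of the first kind and $Y_{lm}$ are the standard orthonormal spherical harmonics on $S^2$ (Condon–Shortley phase convention). Let $\mathcal V_{\mathrm{phys}}=\mathrm{span}\{\Psi_{lmn}\}$ (a space invariant under the operators above). *)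

theory Defs
  imports "HOL-Analysis.Analysis" "HOL-Computational_Algebra.Polynomial"
begin

type_synonym phfun = "((real^3) \<times> (real^3)) \<Rightarrow> complex"

definition du :: "3 \<Rightarrow> phfun \<Rightarrow> phfun" where
  "du i f = (\<lambda>(u,v). vector_derivative (\<lambda>t::real. f (u + t *\<^sub>R axis i 1, v)) (at 0))"

definition dv :: "3 \<Rightarrow> phfun \<Rightarrow> phfun" where
  "dv i f = (\<lambda>(u,v). vector_derivative (\<lambda>t::real. f (u, v + t *\<^sub>R axis i 1)) (at 0))"

definition opA :: "3 \<Rightarrow> 3 \<Rightarrow> phfun \<Rightarrow> phfun" where
  "opA i j f = (\<lambda>(u,v). - \<i> * (complex_of_real (u$i) * du j f (u,v)
                                 - complex_of_real (u$j) * du i f (u,v)))"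

definition opB :: "3 \<Rightarrow> 3 \<Rightarrow> phfun \<Rightarrow> phfun" where
  "opB i j f = (\<lambda>(u,v). - \<i> * (complex_of_real (v$i) * dv j f (u,v)
                                 - complex_of_real (v$j) * dv i f (u,v)))"

definition opC :: "3 \<Rightarrow> 3 \<Rightarrow> phfun \<Rightarrow> phfun" where
  "opC i j f = (\<lambda>(u,v). complex_of_real (u$i * v$j) * f (u,v) + du i (dv j f) (u,v))"

definition sph_bessel_j :: "nat \<Rightarrow> real \<Rightarrow> real" where
  "sph_bessel_j l x = (\<Sum>k. (-1)^k * 2^l * fact (k+l) / (fact k * fact (2*k+2*l+1)) * x^(l+2*k))"

definition legendre :: "nat \<Rightarrow> real poly" where
  "legendre l = smult (1 / (2^l * fact l)) ((pderiv ^^ l) ([:-1, 0, 1:] ^ l))"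

text \<open>Orthonormal spherical harmonics (Condon-Shortley phase) as functions of a
  unit vector w = (x,y,z) = (sin th cos ph, sin th sin ph, cos th):
  Y_lm = N_lm P_l^m(cos th) e^(i m ph), P_l^m(t) = (-1)^m (1-t^2)^(m/2) P_l^(m)(t) for m >= 0,
  Y_l(-m) = (-1)^m conj(Y_lm).\<close>
definition sph_norm :: "nat \<Rightarrow> nat \<Rightarrow> real" where
  "sph_norm l k = sqrt ((2 * real l + 1) / (4 * pi) * fact (l - k) / fact (l + k))"

definition sph_Y :: "nat \<Rightarrow> int \<Rightarrow> real^3 \<Rightarrow> complex" where
  "sph_Y l m w =
     (let k = nat \<bar>m\<bar>;
          P = complex_of_real (sph_norm l k * poly ((pderiv ^^ k) (legendre l)) (w$3))
      in if m \<ge> 0 then (-1)^k * P * (Complex (w$1) (w$2))^k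
         else P * (Complex (w$1) (- w$2))^k)"

definition Psi :: "nat \<Rightarrow> int \<Rightarrow> int \<Rightarrow> phfun" where
  "Psi l m n = (\<lambda>(u,v). complex_of_real (sph_bessel_j l (norm u * norm v))
        * sph_Y l m (u /\<^sub>R norm u) * sph_Y l n (v /\<^sub>R norm v))"

definition valid_idx :: "(nat \<times> int \<times> int) set" where
  "valid_idx = {(l,m,n). \<bar>m\<bar> \<le> int l \<and> \<bar>n\<bar> \<le> int l}"

definition Vphys :: "phfun set" where
  "Vphys = {f. \<exists>S c. finite S \<and> S \<subseteq> valid_idx \<and>
              f = (\<lambda>x. \<Sum>(l,m,n)\<in>S. c (l,m,n) * Psi l m n x)}"

definition is_inner_product_on :: "phfun set \<Rightarrow> (phfun \<Rightarrow> phfun \<Rightarrow> complex) \<Rightarrow> bool" where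
  "is_inner_product_on V ip \<longleftrightarrow>
     (\<forall>f\<in>V. \<forall>g\<in>V. \<forall>h\<in>V. ip (\<lambda>x. f x + g x) h = ip f h + ip g h) \<and>
     (\<forall>f\<in>V. \<forall>g\<in>V. \<forall>c. ip (\<lambda>x. c * f x) g = c * ip f g) \<and>
     (\<forall>f\<in>V. \<forall>g\<in>V. ip g f = cnj (ip f g)) \<and>
     (\<forall>f\<in>V. f \<noteq> (\<lambda>x. 0) \<longrightarrow> 0 < Re (ip f f))"

definition symmetric_on :: "phfun set \<Rightarrow> (phfun \<Rightarrow> phfun \<Rightarrow> complex) \<Rightarrow> (phfun \<Rightarrow> phfun) \<Rightarrow> bool" where
  "symmetric_on V ip T \<longleftrightarrow> (\<forall>f\<in>V. \<forall>g\<in>V. ip (T f) g = ip f (T g))"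

end

theory Submission
  imports Defs
begin

definition ga :: "nat \<Rightarrow> nat \<Rightarrow> real" where
  "ga l k = (-1)^k * 2^l * fact (k+l) / (fact k * fact (2*k+2*l+1))"

definition G :: "nat \<Rightarrow> real \<Rightarrow> real" where
  "G l s = (\<Sum>k. ga l k * s^k)"

lemma ga_bound: "\<bar>ga l k\<bar> \<le> 2^l / fact k"
proof -
  have f: "fact (k+l) \<le> (fact (2*k+2*l+1) :: real)"
    by (intro fact_mono) simp
  have q: "fact (k+l) / fact (2*k+2*l+1) \<le> (1::real)"
    using f by simp
  have "\<bar>ga l k\<bar> = 2^l / fact k * (fact (k+l) / fact (2*k+2*l+1))"
    unfolding ga_def by (simp add: abs_mult field_simps)
  also have "\<dots> \<le> 2^l / fact k * 1"
    by (intro mult_left_mono q) simp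
  finally show ?thesis by simp
qed

lemma summable_ga: "summable (\<lambda>k. ga l k * y^k)"
proof (rule summable_comparison_test)
  show "\<exists>N. \<forall>n\<ge>N. norm (ga l n * y ^ n) \<le> 2^l * (inverse (fact n) * \<bar>y\<bar>^n)"
    using ga_bound[of l] by (auto simp: abs_mult power_abs divide_inverse mult.assoc[symmetric] intro!: mult_right_mono)
  show "summable (\<lambda>n. 2^l * (inverse (fact n) * \<bar>y\<bar>^n :: real))"
    by (intro summable_mult summable_exp)
qed

lemma bessel_G: "sph_bessel_j l x = x^l * G l (x^2)"
proof -
  have "(\<lambda>k. (-1)^k * 2^l * fact (k+l) / (fact k * fact (2*k+2*l+1)) * x^(l+2*k))
        = (\<lambda>k. x^l * (ga l k * (x^2)^k))"
    by (auto simp: ga_def power_add power_mult)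
  thus ?thesis unfolding sph_bessel_j_def G_def
    by (simp add: suminf_mult summable_ga)
qed

lemma ga_Suc_k: "ga l (Suc k) = - ga l k / (2*(real k+1)*(2*real k+2*real l+3))"
proof -
  define A where "A = (fact (k+l) :: real)"
  define B where "B = (fact (2*k+2*l+1) :: real)"
  define C where "C = (fact k :: real)"
  define a where "a = real k + real l + 1"
  define b where "b = real k + 1"
  have e1: "fact (Suc k + l) = a * A"
    unfolding A_def a_def by (simp add: fact_Suc)
  define c where "c = 2*real k+2*real l+3"
  have e4: "fact (2 * Suc k + 2 * l + 1) = c * (2*a) * B"
    unfolding B_def a_def c_def by (simp add: fact_Suc algebra_simps)
  have e7: "fact (Suc k) = b * C" unfolding C_def b_def by (simp add: fact_Suc)
  have p: "A \<noteq> 0" "B \<noteq> 0" "C \<noteq> 0" "a \<noteq> 0" "b \<noteq> 0" "c \<noteq> 0"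
    unfolding A_def B_def C_def a_def b_def c_def by auto
  have e8: "2*(real k+1)*(2*real k+2*real l+3) = 2*b*c" unfolding c_def b_def by simp
  have "ga l (Suc k) = (-1)^Suc k * 2^l * (a*A) / ((b*C) * (c*(2*a)*B))"
    unfolding ga_def e1 e4 e7 by simp
  also have "\<dots> = - ((-1)^k * 2^l * A / (C * B)) / (2*b*c)"
    using p by (simp add: field_simps)
  finally show ?thesis unfolding e8 by (simp add: ga_def A_def B_def C_def)
qed

lemma ga_Suc_l: "ga (Suc l) k = ga l k / (2*real k+2*real l+3)"
proof -
  define A where "A = (fact (k+l) :: real)"
  define B where "B = (fact (2*k+2*l+1) :: real)"
  define C where "C = (fact k :: real)"
  define a where "a = real k + real l + 1"
  have e1: "fact (k + Suc l) = a * A"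
    unfolding A_def a_def by (simp add: fact_Suc)
  define c where "c = 2*real k+2*real l+3"
  have e4: "fact (2 * k + 2 * Suc l + 1) = c * (2*a) * B"
    unfolding B_def a_def c_def by (simp add: fact_Suc algebra_simps)
  have p: "A \<noteq> 0" "B \<noteq> 0" "C \<noteq> 0" "a \<noteq> 0" "c \<noteq> 0"
    unfolding A_def B_def C_def a_def c_def by auto
  have e8: "2*real k+2*real l+3 = c" unfolding c_def by simp
  have "ga (Suc l) k = (-1)^k * 2^Suc l * (a*A) / (C * (c*(2*a)*B))"
    unfolding ga_def e1 e4 C_def by simp
  also have "\<dots> = ((-1)^k * 2^l * A / (C * B)) / c"
    using p by (simp add: field_simps)
  finally show ?thesis unfolding e8 by (simp add: ga_def A_def B_def C_def)
qed

lemma ga_diffs: "diffs (ga l) n = - ga (Suc l) n / 2"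
proof -
  define c where "c = 2*real n+2*real l+3"
  define b where "b = real n + 1"
  have p: "c \<noteq> 0" "b \<noteq> 0" unfolding c_def b_def by auto
  have e: "(of_nat (Suc n)::real) = b" unfolding b_def by simp
  show ?thesis unfolding diffs_def ga_Suc_k ga_Suc_l c_def[symmetric] b_def[symmetric] e using p
    by (simp add: field_simps)
qed

lemma ga_rec0: "ga l 0 = (2*l+3) * ga (Suc l) 0"
  unfolding ga_Suc_l by simp

lemma ga_rec: "ga l (Suc k) + ga (l+2) k = (2*l+3) * ga (Suc l) (Suc k)"
proof -
  define D1 where "D1 = 2*(real k+1)"
  define D2 where "D2 = 2*real k+2*real l+3"
  define D3 where "D3 = 2*real k+2*real l+5"
  have p: "D1 \<noteq> 0" "D2 \<noteq> 0" "D3 \<noteq> 0" unfolding D1_def D2_def D3_def by auto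
  have h: "ga (l+2) k = ga l k / (D2 * D3)"
    unfolding numeral_2_eq_2 add_Suc_right add_0_right ga_Suc_l D2_def D3_def by (simp add: field_simps)
  have h2: "ga (Suc l) (Suc k) = - ga l k / (D1 * D2 * D3)"
    unfolding ga_Suc_k ga_Suc_l D1_def D2_def D3_def by (simp add: field_simps)
  have h3: "ga l (Suc k) = - ga l k / (D1 * D2)"
    unfolding ga_Suc_k D1_def D2_def by (simp add: field_simps)
  have e: "2 * real l + 3 = D3 - D1" unfolding D1_def D3_def by simp
  show ?thesis unfolding h h2 h3 e using p
    by (simp add: field_simps)
qed

lemma G_deriv: "(G l has_real_derivative (- G (Suc l) s / 2)) (at s)"
proof -
  have "(G l has_real_derivative (\<Sum>n. diffs (ga l) n * s^n)) (at s)"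
    unfolding G_def[abs_def] by (rule termdiffs_strong_converges_everywhere) (rule summable_ga)
  moreover have "(\<Sum>n. diffs (ga l) n * s^n) = - G (Suc l) s / 2"
    unfolding ga_diffs G_def
    using suminf_mult[OF summable_ga[of "Suc l" s], of "-1/2"]
    by (simp add: field_simps)
  ultimately show ?thesis by simp
qed

lemma G_rec: "G l s + s * G (l+2) s = (2*l+3) * G (Suc l) s"
proof -
  have s1: "summable (\<lambda>k. ga l k * s^k)" "summable (\<lambda>k. ga (l+2) k * s^k)"
    "summable (\<lambda>k. ga (Suc l) k * s^k)" by (rule summable_ga)+
  have e1: "G l s = ga l 0 + (\<Sum>k. ga l (Suc k) * s^(Suc k))"
    unfolding G_def using suminf_split_head[OF s1(1)] by simp
  have e3: "G (Suc l) s = ga (Suc l) 0 + (\<Sum>k. ga (Suc l) (Suc k) * s^(Suc k))"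
    unfolding G_def using suminf_split_head[OF s1(3)] by simp
  have e2: "s * G (l+2) s = (\<Sum>k. ga (l+2) k * s^(Suc k))"
    unfolding G_def using suminf_mult[OF s1(2), of s] by (simp add: algebra_simps)
  have sa: "summable (\<lambda>k. ga l (Suc k) * s^(Suc k))"
    using s1(1) summable_Suc_iff[of "\<lambda>k. ga l k * s^k"] by simp
  have sb: "summable (\<lambda>k. ga (l+2) k * s^(Suc k))"
    using summable_mult[OF s1(2), of s] by (simp add: algebra_simps)
  have sc: "summable (\<lambda>k. ga (Suc l) (Suc k) * s^(Suc k))"
    using s1(3) summable_Suc_iff[of "\<lambda>k. ga (Suc l) k * s^k"] by simp
  have "(\<Sum>k. ga l (Suc k) * s^(Suc k)) + (\<Sum>k. ga (l+2) k * s^(Suc k))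
      = (\<Sum>k. ga l (Suc k) * s^(Suc k) + ga (l+2) k * s^(Suc k))"
    using suminf_add[OF sa sb] by simp
  also have "\<dots> = (\<Sum>k. (2*l+3) * (ga (Suc l) (Suc k) * s^(Suc k)))"
  proof (rule suminf_cong)
    fix n
    have "ga l (Suc n) * s^Suc n + ga (l+2) n * s^Suc n = (ga l (Suc n) + ga (l+2) n) * s^Suc n"
      by (simp add: algebra_simps)
    also have "\<dots> = ((2*real l+3) * ga (Suc l) (Suc n)) * s^Suc n" by (simp only: ga_rec)
    also have "\<dots> = real (2*l+3) * (ga (Suc l) (Suc n) * s^Suc n)" by simp
    finally show "ga l (Suc n) * s^Suc n + ga (l+2) n * s^Suc n = real (2*l+3) * (ga (Suc l) (Suc n) * s^Suc n)" .
  qed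
  also have "\<dots> = (2*l+3) * (\<Sum>k. ga (Suc l) (Suc k) * s^(Suc k))"
    using suminf_mult[OF sc] by simp
  finally show ?thesis using e1 e2 e3 ga_rec0[of l] by (simp add: algebra_simps)
qed

lemma G_zero: "G l 0 = ga l 0"
  unfolding G_def using powser_zero[of "ga l"] by simp

lemma G00: "G 0 0 = 1"
  by (simp add: G_zero ga_def)


definition X2 :: "real poly" where "X2 = [:-1, 0, 1:]"
definition W :: "nat \<Rightarrow> nat \<Rightarrow> real poly" where "W l n = (pderiv ^^ n) (X2 ^ l)"
definition Q :: "nat \<Rightarrow> nat \<Rightarrow> real poly" where "Q l k = (pderiv ^^ k) (legendre l)"

lemma poly_X2[simp]: "poly X2 t = t^2 - 1"
  by (simp add: X2_def algebra_simps power2_eq_square)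

lemma pderiv_X2[simp]: "pderiv X2 = [:0, 2:]"
  by (simp add: X2_def pderiv_pCons)

lemma W_Suc: "W l (Suc n) = pderiv (W l n)"
  by (simp add: W_def)

lemma Q_Suc: "Q l (Suc n) = pderiv (Q l n)"
  by (simp add: Q_def)

lemma poly_eqI_fun: "(\<And>t. poly p t = poly q t) \<Longrightarrow> (p::real poly) = q"
  using poly_eq_poly_eq_iff[of p q] by auto

lemma W_rec: "X2 * W l (Suc n) = [:0, 2*real l - 2*real n:] * W l n
     + [:2*real l*real n - real n*(real n - 1):] * W l (n-1)"
proof (induction n)
  case 0
  show ?case
  proof (rule poly_eqI_fun)
    fix t
    show "poly (X2 * W l (Suc 0)) t = poly ([:0, 2*real l - 2*real 0:] * W l 0
     + [:2*real l*real 0 - real 0*(real 0 - 1):] * W l (0-1)) t"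
    proof (cases l)
      case 0 thus ?thesis by (simp add: W_def)
    next
      case (Suc m)
      have "pderiv (X2 ^ Suc m) = smult (of_nat (Suc m)) (X2 ^ m) * [:0,2:]"
        using pderiv_power_Suc[of X2 m] by simp
      hence "poly (W l (Suc 0)) t = (real m + 1) * (t^2-1)^m * (2*t)"
        using Suc by (simp add: W_def)
      moreover have "poly (W l 0) t = (t^2-1)^l" by (simp add: W_def)
      ultimately show ?thesis using Suc by simp
    qed
  qed
next
  case (Suc n)
  have d: "pderiv (X2 * W l (Suc n)) = pderiv ([:0, 2*real l - 2*real n:] * W l n
     + [:2*real l*real n - real n*(real n - 1):] * W l (n-1))"
    using Suc by simp
  have e: "smult (2*real l*real n - real n*(real n - 1)) (W l (Suc (n - Suc 0)))
         = smult (2*real l*real n - real n*(real n - 1)) (W l n)"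
    by (cases n) auto
  from d have d2: "X2 * W l (Suc (Suc n)) + W l (Suc n) * [:0,2:] =
       [:0, 2*real l - 2*real n:] * W l (Suc n) + W l n * [:2*real l - 2*real n:]
     + [:2*real l*real n - real n*(real n - 1):] * W l n"
    unfolding pderiv_mult pderiv_add W_Suc[symmetric] by (simp add: pderiv_pCons e)
  show ?case
  proof (rule poly_eqI_fun)
    fix t
    have "poly (X2 * W l (Suc (Suc n)) + W l (Suc n) * [:0,2:]) t =
       poly ([:0, 2*real l - 2*real n:] * W l (Suc n) + W l n * [:2*real l - 2*real n:]
     + [:2*real l*real n - real n*(real n - 1):] * W l n) t" using d2 by simp
    thus "poly (X2 * W l (Suc (Suc n))) t = poly ([:0, 2*real l - 2*real (Suc n):] * W l (Suc n)
     + [:2*real l*real (Suc n) - real (Suc n)*(real (Suc n) - 1):] * W l (Suc n - 1)) t"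
      by (simp add: algebra_simps)
  qed
qed

lemma legendre_W: "legendre l = smult (1 / (2^l * fact l)) (W l l)"
  by (simp add: legendre_def W_def X2_def)

lemma legendre_ode: "X2 * Q l 2 = [:0, -2:] * Q l 1 + [:real l * (real l + 1):] * Q l 0"
proof -
  have h: "X2 * W l (Suc (Suc l)) = [:0, -2:] * W l (Suc l) + [:real l * (real l + 1):] * W l l"
    using W_rec[of l "Suc l"] by (simp add: algebra_simps)
  have q2: "\<And>k. (pderiv ^^ k) (smult c p) = smult c ((pderiv ^^ k) p)" for c p
    by (induct_tac k) (auto simp: pderiv_smult)
  define d where "d = 1 / (2^l * fact l :: real)"
  have q: "poly (Q l k) t = d * poly (W l (k + l)) t" for k t
    by (simp add: Q_def legendre_W W_def q2 funpow_add d_def)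
  show ?thesis
  proof (rule poly_eqI_fun)
    fix t
    have "poly (X2 * W l (Suc (Suc l))) t = poly ([:0, -2:] * W l (Suc l) + [:real l * (real l + 1):] * W l l) t"
      using h by simp
    thus "poly (X2 * Q l 2) t = poly ([:0, -2:] * Q l 1 + [:real l * (real l + 1):] * Q l 0) t"
      by (simp add: q numeral_2_eq_2) algebra
  qed
qed

lemma Q_rec: "X2 * Q l (Suc (Suc k)) = [:0, -2*(real k+1):] * Q l (Suc k)
    + [:real l*(real l+1) - real k*(real k+1):] * Q l k"
proof (induction k)
  case 0
  show ?case using legendre_ode[of l] by (simp add: numeral_2_eq_2)
next
  case (Suc k)
  have d: "pderiv (X2 * Q l (Suc (Suc k))) = pderiv ([:0, -2*(real k+1):] * Q l (Suc k)
    + [:real l*(real l+1) - real k*(real k+1):] * Q l k)"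
    using Suc by simp
  from d have d2: "X2 * Q l (Suc (Suc (Suc k))) + Q l (Suc (Suc k)) * [:0,2:] =
       [:0, -2*(real k+1):] * Q l (Suc (Suc k)) + Q l (Suc k) * [:-2*(real k+1):]
     + [:real l*(real l+1) - real k*(real k+1):] * Q l (Suc k)"
    unfolding pderiv_mult pderiv_add Q_Suc[symmetric] by (simp add: pderiv_pCons)
  show ?case
  proof (rule poly_eqI_fun)
    fix t
    have "poly (X2 * Q l (Suc (Suc (Suc k))) + Q l (Suc (Suc k)) * [:0,2:]) t =
       poly ([:0, -2*(real k+1):] * Q l (Suc (Suc k)) + Q l (Suc k) * [:-2*(real k+1):]
     + [:real l*(real l+1) - real k*(real k+1):] * Q l (Suc k)) t" using d2 by simp
    thus "poly (X2 * Q l (Suc (Suc (Suc k)))) t = poly ([:0, -2*(real (Suc k)+1):] * Q l (Suc (Suc k))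
    + [:real l*(real l+1) - real (Suc k)*(real (Suc k)+1):] * Q l (Suc k)) t"
      by (simp add: algebra_simps)
  qed
qed

lemma Q_rec_poly: "(t^2 - 1) * poly (Q l (Suc (Suc k))) t =
   - 2*(real k+1) * t * poly (Q l (Suc k)) t + (real l*(real l+1) - real k*(real k+1)) * poly (Q l k) t"
proof -
  have "poly (X2 * Q l (Suc (Suc k))) t = poly ([:0, -2*(real k+1):] * Q l (Suc k)
    + [:real l*(real l+1) - real k*(real k+1):] * Q l k) t" by (simp only: Q_rec)
  thus ?thesis by simp
qed

lemma coeff_funpow_pderiv: "coeff ((pderiv^^k) (p::real poly)) n = fact (n+k) / fact n * coeff p (n+k)"
proof (induction k arbitrary: n)
  case 0 thus ?case by simp
next
  case (Suc k)
  have "coeff ((pderiv^^Suc k) p) n = of_nat (Suc n) * coeff ((pderiv^^k) p) (Suc n)"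
    by (simp add: coeff_pderiv)
  also have "\<dots> = of_nat (Suc n) * (fact (Suc n + k) / fact (Suc n) * coeff p (Suc n + k))"
    by (simp add: Suc)
  also have "\<dots> = fact (n + Suc k) / fact n * coeff p (n + Suc k)"
    by (simp add: fact_Suc)
  finally show ?case .
qed

lemma degree_X2[simp]: "degree X2 = 2" by (simp add: X2_def)
lemma X2_nz[simp]: "X2 \<noteq> 0" by (simp add: X2_def)

lemma coeff_X2pow_high: "j > 2*l \<Longrightarrow> coeff (X2^l) j = 0"
proof -
  assume "j > 2*l"
  moreover have "degree (X2^l) \<le> 2*l" using degree_power_le[of X2 l] by simp
  ultimately show ?thesis by (intro coeff_eq_0) simp
qed

lemma coeff_X2pow_top: "coeff (X2^l) (2*l) = 1"
proof -
  have "degree (X2^l) = 2*l" by (simp add: degree_power_eq)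
  moreover have "lead_coeff (X2^l) = 1" by (simp add: lead_coeff_power X2_def)
  ultimately show ?thesis by simp
qed

lemma coeff_legendre: "coeff (legendre l) j = 1/(2^l * fact l) * (fact (j+l) / fact j * coeff (X2^l) (j+l))"
  by (simp add: legendre_def X2_def coeff_funpow_pderiv)

lemma coeff_Q: "coeff (Q l k) j = fact (j+k) / fact j * coeff (legendre l) (j+k)"
  by (simp add: Q_def coeff_funpow_pderiv)

lemma Q_high: "k > l \<Longrightarrow> Q l k = 0"
  by (rule poly_eqI) (simp add: coeff_Q coeff_legendre coeff_X2pow_high)

definition c0 :: "nat \<Rightarrow> real" where "c0 l = fact (2*l) / (2^l * fact l)"

lemma Q_top: "Q l l = [:c0 l:]"
proof (rule poly_eqI)
  fix j
  show "coeff (Q l l) j = coeff [:c0 l:] j"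
  proof (cases j)
    case 0
    have "coeff (X2^l) (l+l) = 1" using coeff_X2pow_top[of l] by (simp add: mult_2)
    thus ?thesis using 0 by (simp add: coeff_Q coeff_legendre c0_def mult_2)
  next
    case (Suc i)
    thus ?thesis by (simp add: coeff_Q coeff_legendre coeff_X2pow_high)
  qed
qed

lemma poly_Q_top[simp]: "poly (Q l l) t = c0 l" by (simp add: Q_top)

lemma c0_pos: "c0 l > 0" by (simp add: c0_def)

lemma c0_Suc: "c0 (Suc l) = (2*real l+1) * c0 l"
proof -
  define a where "a = real l + 1"
  define A where "A = (fact l :: real)"
  define B where "B = (fact (2*l) :: real)"
  have e1: "fact (2 * Suc l) = (2*a)*(2*real l+1) * B"
    unfolding a_def B_def by (simp add: fact_Suc algebra_simps)
  have e2: "(fact (Suc l) :: real) = a * A" unfolding a_def A_def by (simp add: fact_Suc)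
  have p: "a \<noteq> 0" "A \<noteq> 0" unfolding a_def A_def by auto
  have "c0 (Suc l) = (2*a)*(2*real l+1) * B / (2^Suc l * (a * A))"
    unfolding c0_def e1 e2 by simp
  also have "\<dots> = (2*real l+1) * (B / (2^l * A))" using p by (simp add: field_simps)
  finally show ?thesis unfolding c0_def A_def B_def .
qed

lemma poly_Q_sub1: "poly (Q (Suc l) l) t = c0 (Suc l) * t"
proof -
  have h: "(t^2 - 1) * poly (Q (Suc l) (Suc (Suc l))) t =
   - 2*(real l+1) * t * poly (Q (Suc l) (Suc l)) t + (real (Suc l)*(real (Suc l)+1) - real l*(real l+1)) * poly (Q (Suc l) l) t"
    by (rule Q_rec_poly)
  have "Q (Suc l) (Suc (Suc l)) = 0" by (rule Q_high) simp
  with h have "0 = - 2*(real l+1) * t * c0 (Suc l) + (2*(real l + 1)) * poly (Q (Suc l) l) t"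
    by (simp add: algebra_simps)
  hence "(2*(real l + 1)) * poly (Q (Suc l) l) t = (2*(real l + 1)) * (c0 (Suc l) * t)"
    by (simp add: algebra_simps)
  moreover have "2*(real l + 1) \<noteq> 0" by simp
  ultimately show ?thesis by (metis mult_left_cancel)
qed

lemma poly_Q_sub2: "poly (Q (Suc (Suc l)) l) t = c0 (Suc (Suc l)) * ((2*real l+3)*t^2 - 1) / (4*real l+6)"
proof -
  have h1: "poly (Q (Suc (Suc l)) (Suc l)) t = c0 (Suc (Suc l)) * t"
    using poly_Q_sub1[of "Suc l" t] by simp
  have h: "(t^2 - 1) * poly (Q (Suc (Suc l)) (Suc (Suc l))) t =
   - 2*(real l+1) * t * poly (Q (Suc (Suc l)) (Suc l)) t + (real (Suc (Suc l))*(real (Suc (Suc l))+1) - real l*(real l+1)) * poly (Q (Suc (Suc l)) l) t"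
    by (rule Q_rec_poly)
  hence "(t^2 - 1) * c0 (Suc (Suc l)) = - 2*(real l+1) * t * (c0 (Suc (Suc l)) * t) + (4*real l+6) * poly (Q (Suc (Suc l)) l) t"
    unfolding h1 by (simp add: algebra_simps)
  hence e: "(4*real l+6) * poly (Q (Suc (Suc l)) l) t = c0 (Suc (Suc l)) * ((2*real l+3)*t^2 - 1)"
    by (simp add: algebra_simps power2_eq_square)
  define d where "d = 4*real l+6"
  have "d \<noteq> 0" unfolding d_def by simp
  with e show ?thesis unfolding d_def[symmetric] by (simp add: eq_divide_eq mult.commute)
qed


definition Hs :: "real \<Rightarrow> nat \<Rightarrow> real poly \<Rightarrow> real^3 \<Rightarrow> complex" where
  "Hs s k q w = (of_real (w$1) + \<i> * of_real (s * w$2))^k * of_real (poly q (w$3))"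

definition dH :: "real \<Rightarrow> nat \<Rightarrow> real poly \<Rightarrow> real^3 \<Rightarrow> real^3 \<Rightarrow> complex" where
  "dH s k q w v = of_nat k * (of_real (w$1) + \<i> * of_real (s * w$2))^(k-1)
      * (of_real (v$1) + \<i> * of_real (s * v$2)) * of_real (poly q (w$3))
    + (of_real (w$1) + \<i> * of_real (s * w$2))^k * of_real (poly (pderiv q) (w$3) * v$3)"

lemma vd_chain:
  assumes "(f has_real_derivative f') (at x)" "(g has_vector_derivative g') (at (f x))"
  shows "((\<lambda>t. g (f t)) has_vector_derivative (f' *\<^sub>R g')) (at x)"
proof -
  have f: "(f has_vector_derivative f') (at x within UNIV)"
    using assms(1) by (simp add: has_real_derivative_iff_has_vector_derivative)
  have g: "(g has_derivative (\<lambda>h. h *\<^sub>R g')) (at (f x) within f ` UNIV)"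
    using assms(2) unfolding has_vector_derivative_def by (rule has_derivative_at_withinI)
  show ?thesis using vector_derivative_diff_chain_within[OF f g] by (simp add: o_def)
qed

lemma vd_power:
  fixes g :: "real \<Rightarrow> complex"
  assumes "(g has_vector_derivative g') (at x)"
  shows "((\<lambda>t. (g t)^n) has_vector_derivative (of_nat n * g x^(n-1) * g')) (at x)"
proof (induction n)
  case 0 thus ?case by (simp add: has_vector_derivative_const)
next
  case (Suc n)
  have "((\<lambda>t. g t * (g t)^n) has_vector_derivative (g x * (of_nat n * g x^(n-1) * g') + g' * g x ^ n)) (at x)"
    by (rule has_vector_derivative_mult[OF assms Suc])
  moreover have "g x * (of_nat n * g x^(n-1) * g') + g' * g x ^ n = of_nat (Suc n) * g x^(Suc n - 1) * g'"
    by (cases n) (simp_all add: algebra_simps)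
  ultimately show ?case by simp
qed

lemma norm_deriv:
  fixes x h :: "real^3"
  assumes "x \<noteq> 0"
  shows "((\<lambda>t. norm (x + t *\<^sub>R h)) has_real_derivative (inner x h / norm x)) (at 0)"
proof -
  have n: "(norm has_derivative (\<lambda>y. inner y (sgn x))) (at (x + 0 *\<^sub>R h))"
    using has_derivative_norm[OF assms] by simp
  have l: "((\<lambda>t. x + t *\<^sub>R h) has_derivative (\<lambda>t. t *\<^sub>R h)) (at 0)"
    by (auto intro!: derivative_eq_intros)
  have "((\<lambda>t. norm (x + t *\<^sub>R h)) has_derivative (\<lambda>t. inner (t *\<^sub>R h) (sgn x))) (at 0)"
    using has_derivative_compose[OF l n] by simp
  moreover have "(\<lambda>t. inner (t *\<^sub>R h) (sgn x)) = (*) (inner x h / norm x)"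
    by (auto simp: sgn_div_norm inner_commute field_simps)
  ultimately show ?thesis unfolding has_field_derivative_def by simp
qed

lemma comp_deriv:
  fixes x h :: "real^3"
  assumes "x \<noteq> 0"
  shows "((\<lambda>t. (x$i + t * h$i) / norm (x + t *\<^sub>R h)) has_real_derivative
      (h$i / norm x - inner x h / norm x ^ 3 * x$i)) (at 0)"
proof -
  have nz: "norm x \<noteq> 0" using assms by simp
  have "((\<lambda>t. (x$i + t * h$i) / norm (x + t *\<^sub>R h)) has_real_derivative
      ((h$i * norm (x + 0 *\<^sub>R h) - (x$i + 0 * h$i) * (inner x h / norm x)) / (norm (x + 0 *\<^sub>R h) * norm (x + 0 *\<^sub>R h)))) (at 0)"
    by (rule DERIV_divide) (auto intro!: derivative_eq_intros norm_deriv assms)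
  moreover have "(h$i * norm (x + 0 *\<^sub>R h) - (x$i + 0 * h$i) * (inner x h / norm x)) / (norm (x + 0 *\<^sub>R h) * norm (x + 0 *\<^sub>R h))
      = h$i / norm x - inner x h / norm x ^ 3 * x$i"
    using nz by (simp add: field_simps power2_eq_square power3_eq_cube)
  ultimately show ?thesis by simp
qed

lemma comp_div: "((y::real^3) /\<^sub>R n) $ i = y$i / n"
  by (simp add: divide_inverse_commute)

lemma DF:
  fixes x h :: "real^3" and \<phi> :: "real \<Rightarrow> complex"
  assumes "x \<noteq> 0" "(\<phi> has_vector_derivative \<phi>') (at (norm x))"
  shows "((\<lambda>t. \<phi> (norm (x + t *\<^sub>R h)) * Hs s k q ((x + t *\<^sub>R h) /\<^sub>R norm (x + t *\<^sub>R h)))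
    has_vector_derivative
   ((inner x h / norm x) *\<^sub>R \<phi>' * Hs s k q (x /\<^sub>R norm x)
    + \<phi> (norm x) * dH s k q (x /\<^sub>R norm x) ((1/norm x) *\<^sub>R h - (inner x h / norm x ^ 3) *\<^sub>R x))) (at 0)"
proof -
  define N where "N = (\<lambda>t. norm (x + t *\<^sub>R h))"
  define V where "V = (\<lambda>i t. (x$i + t * h$i) / N t)"
  define V' where "V' = (\<lambda>i. h$i / norm x - inner x h / norm x ^ 3 * x$i)"
  have N0: "N 0 = norm x" by (simp add: N_def)
  have V0: "V i 0 = (x /\<^sub>R norm x) $ i" for i by (simp add: V_def N_def divide_inverse_commute)
  have dV: "(V i has_real_derivative V' i) (at 0)" for i
    unfolding V_def V'_def N_def using comp_deriv[OF assms(1)] .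
  have dN: "(N has_real_derivative (inner x h / norm x)) (at 0)"
    unfolding N_def by (rule norm_deriv[OF assms(1)])
  define g where "g = (\<lambda>t. of_real (V 1 t) + \<i> * of_real (s * V 2 t) :: complex)"
  have dg: "(g has_vector_derivative (of_real (V' 1) + \<i> * of_real (s * V' 2))) (at 0)"
    unfolding g_def by (auto intro!: derivative_eq_intros dV)
  have dgk: "((\<lambda>t. (g t)^k) has_vector_derivative (of_nat k * g 0^(k-1) * (of_real (V' 1) + \<i> * of_real (s * V' 2)))) (at 0)"
    by (rule vd_power[OF dg])
  have dP: "((\<lambda>t. poly q (V 3 t)) has_real_derivative (poly (pderiv q) (V 3 0) * V' 3)) (at 0)"
    by (rule DERIV_chain2[OF poly_DERIV dV])
  have dP2: "((\<lambda>t. of_real (poly q (V 3 t)) :: complex) has_vector_derivative of_real (poly (pderiv q) (V 3 0) * V' 3)) (at 0)"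
    by (rule has_vector_derivative_of_real[OF dP])
  have dphi: "((\<lambda>t. \<phi> (N t)) has_vector_derivative ((inner x h / norm x) *\<^sub>R \<phi>')) (at 0)"
    by (rule vd_chain[OF dN]) (simp add: N0 assms(2))
  have dF: "((\<lambda>t. \<phi> (N t) * ((g t)^k * of_real (poly q (V 3 t)))) has_vector_derivative
     (\<phi> (N 0) * ((g 0)^k * of_real (poly (pderiv q) (V 3 0) * V' 3) + (of_nat k * g 0^(k-1) * (of_real (V' 1) + \<i> * of_real (s * V' 2))) * of_real (poly q (V 3 0)))
      + ((inner x h / norm x) *\<^sub>R \<phi>') * ((g 0)^k * of_real (poly q (V 3 0))))) (at 0)"
    by (intro has_vector_derivative_mult dphi dgk dP2)
  have eqf: "(\<lambda>t. \<phi> (norm (x + t *\<^sub>R h)) * Hs s k q ((x + t *\<^sub>R h) /\<^sub>R norm (x + t *\<^sub>R h)))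
     = (\<lambda>t. \<phi> (N t) * ((g t)^k * of_real (poly q (V 3 t))))"
    by (auto simp: Hs_def g_def V_def N_def divide_inverse mult_ac)
  have eqv: "\<phi> (N 0) * ((g 0)^k * of_real (poly (pderiv q) (V 3 0) * V' 3) + (of_nat k * g 0^(k-1) * (of_real (V' 1) + \<i> * of_real (s * V' 2))) * of_real (poly q (V 3 0)))
      + ((inner x h / norm x) *\<^sub>R \<phi>') * ((g 0)^k * of_real (poly q (V 3 0)))
    = (inner x h / norm x) *\<^sub>R \<phi>' * Hs s k q (x /\<^sub>R norm x)
    + \<phi> (norm x) * dH s k q (x /\<^sub>R norm x) ((1/norm x) *\<^sub>R h - (inner x h / norm x ^ 3) *\<^sub>R x)"
    unfolding Hs_def dH_def g_def V0[symmetric] N0 V'_def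
    by (simp add: algebra_simps divide_inverse_commute)
  show ?thesis using dF unfolding eqf eqv .
qed

definition pd :: "3 \<Rightarrow> (real^3 \<Rightarrow> complex) \<Rightarrow> real^3 \<Rightarrow> complex" where
  "pd j F x = vector_derivative (\<lambda>t. F (x + t *\<^sub>R axis j 1)) (at 0)"

lemma du_pd: "du j f (u,v) = pd j (\<lambda>y. f (y,v)) u"
  by (simp add: du_def pd_def)

lemma dv_pd: "dv j f (u,v) = pd j (\<lambda>y. f (u,y)) v"
  by (simp add: dv_def pd_def)

lemma dH_comp: "dH s k q w v = of_real (v$1) * (of_nat k * (of_real (w$1) + \<i> * of_real (s * w$2))^(k-1) * of_real (poly q (w$3)))
   + of_real (v$2) * (\<i> * of_real s * (of_nat k * (of_real (w$1) + \<i> * of_real (s * w$2))^(k-1) * of_real (poly q (w$3))))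
   + of_real (v$3) * ((of_real (w$1) + \<i> * of_real (s * w$2))^k * of_real (poly (pderiv q) (w$3)))"
  unfolding dH_def by (simp add: algebra_simps)

lemma rot_alg:
  fixes xi xj x1 x2 x3 r P P2 Phi A C B di1 di2 di3 dj1 dj2 dj3 :: complex
  assumes "r \<noteq> 0"
  shows "xi * (xj / r * P * P2 + Phi * ((dj1 / r - xj / r^3 * x1) * A + (dj2 / r - xj / r^3 * x2) * C + (dj3 / r - xj / r^3 * x3) * B))
       - xj * (xi / r * P * P2 + Phi * ((di1 / r - xi / r^3 * x1) * A + (di2 / r - xi / r^3 * x2) * C + (di3 / r - xi / r^3 * x3) * B))
     = Phi * (xi / r * (dj1 * A + dj2 * C + dj3 * B) - xj / r * (di1 * A + di2 * C + di3 * B))"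
  using assms by (simp add: field_simps)

lemma rot_F:
  fixes x :: "real^3" and \<phi> :: "real \<Rightarrow> complex" and s :: real and k :: nat and q :: "real poly"
  assumes "x \<noteq> 0" "(\<phi> has_vector_derivative \<phi>') (at (norm x))"
  defines "w \<equiv> x /\<^sub>R norm x"
  defines "A \<equiv> of_nat k * (of_real (w$1) + \<i> * of_real (s * w$2))^(k-1) * of_real (poly q (w$3))"
  defines "B \<equiv> (of_real (w$1) + \<i> * of_real (s * w$2))^k * of_real (poly (pderiv q) (w$3))"
  shows "of_real (x$i) * pd j (\<lambda>y. \<phi> (norm y) * Hs s k q (y /\<^sub>R norm y)) x
       - of_real (x$j) * pd i (\<lambda>y. \<phi> (norm y) * Hs s k q (y /\<^sub>R norm y)) x
     = \<phi> (norm x) * (of_real (w$i) * (of_real (axis j 1 $ 1) * A + of_real (axis j 1 $ 2) * (\<i> * of_real s * A) + of_real (axis j 1 $ 3) * B)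
                    - of_real (w$j) * (of_real (axis i 1 $ 1) * A + of_real (axis i 1 $ 2) * (\<i> * of_real s * A) + of_real (axis i 1 $ 3) * B))"
proof -
  have r: "norm x \<noteq> 0" using assms(1) by simp
  have p: "pd j (\<lambda>y. \<phi> (norm y) * Hs s k q (y /\<^sub>R norm y)) x =
     (inner x (axis j 1) / norm x) *\<^sub>R \<phi>' * Hs s k q w
    + \<phi> (norm x) * dH s k q w ((1/norm x) *\<^sub>R axis j 1 - (inner x (axis j 1) / norm x ^ 3) *\<^sub>R x)" for j
    unfolding pd_def w_def by (rule vector_derivative_at[OF DF[OF assms(1,2)]])
  have ix: "inner x (axis j 1) = x$j" for j by (simp add: inner_axis)
  have wc: "w$c = x$c / norm x" for c by (simp add: w_def divide_inverse_commute)
  have c: "((1/norm x) *\<^sub>R axis j 1 - (x$j / norm x ^ 3) *\<^sub>R x) $ c = (axis j 1 $ c)/norm x - x$j/norm x^3 * x$c" for j c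
    by simp
  have sc: "(a::real) *\<^sub>R (z::complex) = of_real a * z" for a z by (simp add: scaleR_conv_of_real)
  have r': "(of_real (norm x) :: complex) \<noteq> 0" using r by simp
  have e: "of_real (a / b) = (of_real a / of_real b :: complex)" for a b by simp
  have e2: "of_real (a - b) = (of_real a - of_real b :: complex)" for a b by simp
  have e3: "of_real (a * b) = (of_real a * of_real b :: complex)" for a b by simp
  have e4: "of_real (a ^ n) = (of_real a ^ n :: complex)" for a n by simp
  show ?thesis unfolding p ix dH_comp
    unfolding A_def[symmetric] B_def[symmetric]
    unfolding c sc wc
    unfolding e e2 e3 e4
    by (rule rot_alg[OF r'])
qed


definition ys :: "int \<Rightarrow> real" where "ys m = (if 0 \<le> m then 1 else -1)"
definition yc :: "nat \<Rightarrow> int \<Rightarrow> complex" where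
  "yc l m = (if 0 \<le> m then (-1)^(nat \<bar>m\<bar>) else 1) * of_real (sph_norm l (nat \<bar>m\<bar>))"

lemma Y_Hs: "sph_Y l m w = yc l m * Hs (ys m) (nat \<bar>m\<bar>) (Q l (nat \<bar>m\<bar>)) w"
  by (simp add: sph_Y_def yc_def ys_def Hs_def Q_def Let_def Complex_eq)

lemma Y_high: "nat \<bar>m\<bar> > l \<Longrightarrow> sph_Y l m w = 0"
  by (simp add: Y_Hs Hs_def Q_high)

lemma sph_norm_step:
  assumes "k < l"
  shows "sph_norm l k = sqrt (real ((l-k)*(l+k+1))) * sph_norm l (Suc k)"
proof -
  define c where "c = (2 * real l + 1) / (4 * pi)"
  have c: "c \<ge> 0" unfolding c_def by simp
  have f1: "(fact (l - k) :: real) = real (l-k) * fact (l - Suc k)"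
    using assms by (metis Suc_diff_Suc fact_Suc of_nat_mult)
  have f2: "(fact (l + Suc k) :: real) = real (l+k+1) * fact (l + k)"
    by (simp add: fact_Suc)
  have p: "real (l+k+1) > 0" "(fact (l+k)::real) > 0" by auto
  have "sqrt (real ((l-k)*(l+k+1))) * sph_norm l (Suc k)
      = sqrt (real ((l-k)*(l+k+1)) * (c * fact (l - Suc k) / fact (l + Suc k)))"
    by (simp only: sph_norm_def c_def real_sqrt_mult)
  also have "real ((l-k)*(l+k+1)) * (c * fact (l - Suc k) / fact (l + Suc k)) = c * fact (l-k) / fact (l+k)"
  proof -
    define E where "E = real (l+k+1)"
    define D where "D = real (l-k)"
    define F where "F = (fact (l+k) :: real)"
    have pe: "E \<noteq> 0" "F \<noteq> 0" unfolding E_def F_def by auto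
    have "real ((l-k)*(l+k+1)) = D * E" unfolding D_def E_def by (simp only: of_nat_mult)
    thus ?thesis unfolding f1 f2 E_def[symmetric] D_def[symmetric] F_def[symmetric] using pe
      by (simp add: field_simps)
  qed
  finally show ?thesis unfolding sph_norm_def c_def by simp
qed

lemma sph_norm_pos: "k \<le> l \<Longrightarrow> sph_norm l k > 0"
  by (simp add: sph_norm_def)

definition Wsm :: "real \<Rightarrow> real^3 \<Rightarrow> complex" where
  "Wsm s w = of_real (w$1) + \<i> * of_real (s * w$2)"
definition cA :: "nat \<Rightarrow> int \<Rightarrow> real^3 \<Rightarrow> complex" where
  "cA l m w = of_nat (nat \<bar>m\<bar>) * Wsm (ys m) w ^ (nat \<bar>m\<bar> - 1) * of_real (poly (Q l (nat \<bar>m\<bar>)) (w$3))"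
definition cB :: "nat \<Rightarrow> int \<Rightarrow> real^3 \<Rightarrow> complex" where
  "cB l m w = Wsm (ys m) w ^ (nat \<bar>m\<bar>) * of_real (poly (Q l (Suc (nat \<bar>m\<bar>))) (w$3))"
definition la :: "nat \<Rightarrow> int \<Rightarrow> real" where
  "la l m = sqrt (of_int ((int l - m) * (int l + m + 1)))"
definition lb :: "nat \<Rightarrow> int \<Rightarrow> real" where
  "lb l m = sqrt (of_int ((int l + m) * (int l - m + 1)))"

lemma Y_W: "sph_Y l m w = yc l m * Wsm (ys m) w ^ (nat \<bar>m\<bar>) * of_real (poly (Q l (nat \<bar>m\<bar>)) (w$3))"
  by (simp add: Y_Hs Hs_def Wsm_def)

lemma coreZ: "yc l m * (of_real (ys m) * cA l m w * Wsm (ys m) w) = of_int m * sph_Y l m w"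
proof (cases "nat \<bar>m\<bar>")
  case 0
  hence "m = 0" by simp
  thus ?thesis by (simp add: cA_def)
next
  case (Suc j)
  have mm: "m = (if 0 \<le> m then int (Suc j) else - int (Suc j))" using Suc by auto
  have m: "of_int m = (of_real (ys m) * of_nat (Suc j) :: complex)"
    by (subst mm) (auto simp: ys_def)
  show ?thesis unfolding Y_W cA_def Suc m by (simp add: algebra_simps)
qed

lemma WpWm:
  assumes "w$1^2 + w$2^2 + w$3^2 = 1"
  shows "(of_real (w$1) + \<i> * of_real (w$2)) * Wsm (-1) w = of_real (1 - w$3^2)"
proof -
  have "(of_real (w$1) + \<i> * of_real (w$2)) * Wsm (-1) w = of_real (w$1^2 + w$2^2)"
    by (simp add: Wsm_def algebra_simps power2_eq_square)
  moreover have "w$1^2 + w$2^2 = 1 - w$3^2" using assms by simp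
  ultimately show ?thesis by simp
qed

lemma coreP:
  assumes "\<bar>m\<bar> \<le> int l" "w$1^2 + w$2^2 + w$3^2 = 1"
  shows "yc l m * ((1 - of_real (ys m)) * of_real (w$3) * cA l m w - (of_real (w$1) + \<i> * of_real (w$2)) * cB l m w)
       = of_real (la l m) * sph_Y l (m+1) w"
proof -
  consider (a) "0 \<le> m" "m < int l" | (b) "m = int l" | (c) "m < 0" using assms(1) by linarith
  thus ?thesis
  proof cases
    case a
    define k where "k = nat m"
    have mk: "m = int k" "k < l" using a unfolding k_def by auto
    have N: "sph_norm l k = sqrt (real ((l-k)*(l+k+1))) * sph_norm l (Suc k)"
      by (rule sph_norm_step[OF mk(2)])
    obtain d where d: "l = Suc (k + d)" using less_imp_Suc_add[OF mk(2)] by blast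
    have L: "la l m = sqrt (real ((l-k)*(l+k+1)))"
      unfolding la_def mk(1) d by (simp add: algebra_simps)
    have e1: "nat \<bar>m + 1\<bar> = Suc k" "nat \<bar>m\<bar> = k" "ys m = 1" "ys (m+1) = 1" "0 \<le> m+1"
      using mk by (auto simp: ys_def)
    show ?thesis unfolding Y_W cA_def cB_def yc_def e1 L N using a
      by (simp add: Wsm_def algebra_simps)
  next
    case b
    have e1: "nat \<bar>m\<bar> = l" "ys m = 1" using b by (auto simp: ys_def)
    have "la l m = 0" unfolding la_def b by simp
    thus ?thesis unfolding cA_def cB_def e1 by (simp add: Q_high)
  next
    case c
    define j where "j = nat (- m) - 1"
    have mj: "m = - int (Suc j)" "j < l" using c assms(1) unfolding j_def by auto
    have N: "sph_norm l j = sqrt (real ((l-j)*(l+j+1))) * sph_norm l (Suc j)"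
      by (rule sph_norm_step[OF mj(2)])
    obtain d where d: "l = Suc (j + d)" using less_imp_Suc_add[OF mj(2)] by blast
    have L: "la l m = sqrt (real ((l-j)*(l+j+1)))"
      unfolding la_def mj(1) d by (simp add: algebra_simps)
    have X: "real ((l-j)*(l+j+1)) = real l * (real l + 1) - real j * (real j + 1)"
      unfolding d by (simp add: algebra_simps)
    have sq: "sqrt (real ((l-j)*(l+j+1))) * sqrt (real ((l-j)*(l+j+1))) = real ((l-j)*(l+j+1))"
      by simp
    have e1: "nat \<bar>m\<bar> = Suc j" "ys m = -1" using mj by (auto simp: ys_def)
    have Ym: "sph_Y l (m+1) w = of_real (sph_norm l j) * Wsm (-1) w ^ j * of_real (poly (Q l j) (w$3))"
    proof (cases j)
      case 0
      hence "m + 1 = 0" using mj by simp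
      thus ?thesis using 0 by (simp add: Y_W yc_def)
    next
      case (Suc i)
      hence "m + 1 < 0" "nat \<bar>m+1\<bar> = j" "ys (m+1) = -1" using mj by (auto simp: ys_def)
      thus ?thesis by (simp add: Y_W yc_def)
    qed
    have R: "(w$3^2 - 1) * poly (Q l (Suc (Suc j))) (w$3) =
      - 2*(real j+1) * w$3 * poly (Q l (Suc j)) (w$3) + (real l*(real l+1) - real j*(real j+1)) * poly (Q l j) (w$3)"
      by (rule Q_rec_poly)
    have W: "(of_real (w$1) + \<i> * of_real (w$2)) * Wsm (-1) w ^ Suc j = of_real (1 - w$3^2) * Wsm (-1) w ^ j"
    proof -
      have "(of_real (w$1) + \<i> * of_real (w$2)) * Wsm (-1) w ^ Suc j
          = ((of_real (w$1) + \<i> * of_real (w$2)) * Wsm (-1) w) * Wsm (-1) w ^ j"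
        by (simp only: power_Suc mult.assoc)
      thus ?thesis unfolding WpWm[OF assms(2)] .
    qed
    have "yc l m * ((1 - of_real (ys m)) * of_real (w$3) * cA l m w - (of_real (w$1) + \<i> * of_real (w$2)) * cB l m w)
       = of_real (sph_norm l (Suc j)) * (2 * of_real (w$3) * (of_nat (Suc j) * Wsm (-1) w ^ j * of_real (poly (Q l (Suc j)) (w$3)))
          - ((of_real (w$1) + \<i> * of_real (w$2)) * Wsm (-1) w ^ Suc j) * of_real (poly (Q l (Suc (Suc j))) (w$3)))"
      unfolding cA_def cB_def yc_def e1 using c by (simp add: mult.assoc)
    also have "\<dots> = of_real (sph_norm l (Suc j)) * Wsm (-1) w ^ j *
         of_real (2 * (real j + 1) * w$3 * poly (Q l (Suc j)) (w$3) - (1 - w$3^2) * poly (Q l (Suc (Suc j))) (w$3))"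
      unfolding W by (simp add: algebra_simps)
    also have "2 * (real j + 1) * w$3 * poly (Q l (Suc j)) (w$3) - (1 - w$3^2) * poly (Q l (Suc (Suc j))) (w$3)
       = real ((l-j)*(l+j+1)) * poly (Q l j) (w$3)"
      unfolding X using R by (simp add: algebra_simps)
    finally have F: "yc l m * ((1 - of_real (ys m)) * of_real (w$3) * cA l m w - (of_real (w$1) + \<i> * of_real (w$2)) * cB l m w)
       = of_real (sph_norm l (Suc j)) * Wsm (-1) w ^ j * of_real (real ((l-j)*(l+j+1)) * poly (Q l j) (w$3))" .
    define X where "X = real ((l-j)*(l+j+1))"
    have sqX: "sqrt X * sqrt X = X" unfolding X_def by simp
    have "of_real (la l m) * sph_Y l (m+1) w =
       of_real (sqrt X * sqrt X) * (of_real (sph_norm l (Suc j)) * Wsm (-1) w ^ j * of_real (poly (Q l j) (w$3)))"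
      unfolding Ym L N X_def[symmetric] by (simp only: of_real_mult mult_ac)
    thus ?thesis unfolding F X_def[symmetric] sqX by (simp add: mult_ac)
  qed
qed

lemma WmWp:
  assumes "w$1^2 + w$2^2 + w$3^2 = 1"
  shows "(of_real (w$1) - \<i> * of_real (w$2)) * Wsm 1 w = of_real (1 - w$3^2)"
proof -
  have "(of_real (w$1) - \<i> * of_real (w$2)) * Wsm 1 w = of_real (w$1^2 + w$2^2)"
    by (simp add: Wsm_def algebra_simps power2_eq_square)
  moreover have "w$1^2 + w$2^2 = 1 - w$3^2" using assms by simp
  ultimately show ?thesis by simp
qed

lemma Wm_eq: "of_real (w$1) - \<i> * of_real (w$2) = Wsm (-1) w"
  by (simp add: Wsm_def)

lemma coreM:
  assumes "\<bar>m\<bar> \<le> int l" "w$1^2 + w$2^2 + w$3^2 = 1"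
  shows "yc l m * ((of_real (w$1) - \<i> * of_real (w$2)) * cB l m w - (1 + of_real (ys m)) * of_real (w$3) * cA l m w)
       = of_real (lb l m) * sph_Y l (m-1) w"
proof -
  consider (a) "m \<le> 0" "- int l < m" | (b) "m = - int l" | (c) "m > 0" using assms(1) by linarith
  thus ?thesis
  proof cases
    case a
    define k where "k = nat (- m)"
    have mk: "m = - int k" "k < l" using a unfolding k_def by auto
    have N: "sph_norm l k = sqrt (real ((l-k)*(l+k+1))) * sph_norm l (Suc k)"
      by (rule sph_norm_step[OF mk(2)])
    obtain d where d: "l = Suc (k + d)" using less_imp_Suc_add[OF mk(2)] by blast
    have L0: "(int l + m) * (int l - m + 1) = int ((l-k)*(l+k+1))"
      unfolding mk(1) d by (simp add: algebra_simps)
    have L: "lb l m = sqrt (real ((l-k)*(l+k+1)))"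
      unfolding lb_def L0 by simp
    have e1: "nat \<bar>m - 1\<bar> = Suc k" "nat \<bar>m\<bar> = k" "ys (m-1) = -1" "\<not> 0 \<le> m - 1"
      using mk by (auto simp: ys_def)
    have cA0: "(1 + of_real (ys m)) * of_real (w$3) * cA l m w = 0"
      using mk by (cases "k = 0") (auto simp: ys_def cA_def)
    have W0: "Wsm (ys m) w ^ k = Wsm (-1) w ^ k"
      using mk by (cases "k = 0") (auto simp: ys_def)
    have Y0: "yc l m = of_real (sph_norm l k)"
      using mk by (cases "k = 0") (auto simp: yc_def)
    have "yc l m * ((of_real (w$1) - \<i> * of_real (w$2)) * cB l m w - (1 + of_real (ys m)) * of_real (w$3) * cA l m w)
       = of_real (sph_norm l k) * (Wsm (-1) w * Wsm (-1) w ^ k * of_real (poly (Q l (Suc k)) (w$3)))"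
      unfolding cA0 Y0 Wm_eq cB_def e1 W0 by (simp add: algebra_simps)
    moreover have "of_real (lb l m) * sph_Y l (m-1) w = of_real (sph_norm l k) * (Wsm (-1) w * Wsm (-1) w ^ k * of_real (poly (Q l (Suc k)) (w$3)))"
      unfolding Y_W yc_def e1 L N using a by (simp add: mult_ac)
    ultimately show ?thesis by simp
  next
    case b
    have e1: "nat \<bar>m\<bar> = l" using b by auto
    have "lb l m = 0" unfolding lb_def b by simp
    moreover have c0: "(1 + of_real (ys m)) * of_real (w$3) * cA l m w = 0"
      using b by (cases "l = 0") (auto simp: ys_def cA_def)
    ultimately show ?thesis unfolding cB_def e1 c0 by (simp add: Q_high)
  next
    case c
    define j where "j = nat m - 1"
    have mj: "m = int (Suc j)" "j < l" using c assms(1) unfolding j_def by auto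
    have N: "sph_norm l j = sqrt (real ((l-j)*(l+j+1))) * sph_norm l (Suc j)"
      by (rule sph_norm_step[OF mj(2)])
    obtain d where d: "l = Suc (j + d)" using less_imp_Suc_add[OF mj(2)] by blast
    have L0: "(int l + m) * (int l - m + 1) = int ((l-j)*(l+j+1))"
      unfolding mj(1) d by (simp add: algebra_simps)
    have L: "lb l m = sqrt (real ((l-j)*(l+j+1)))"
      unfolding lb_def L0 by simp
    have X: "real ((l-j)*(l+j+1)) = real l * (real l + 1) - real j * (real j + 1)"
      unfolding d by (simp add: algebra_simps)
    have e1: "nat \<bar>m\<bar> = Suc j" "ys m = 1" "0 \<le> m" "nat \<bar>m - 1\<bar> = j" "ys (m-1) = 1" "0 \<le> m - 1"
      using mj by (auto simp: ys_def)
    have R: "(w$3^2 - 1) * poly (Q l (Suc (Suc j))) (w$3) =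
      - 2*(real j+1) * w$3 * poly (Q l (Suc j)) (w$3) + (real l*(real l+1) - real j*(real j+1)) * poly (Q l j) (w$3)"
      by (rule Q_rec_poly)
    have W: "(of_real (w$1) - \<i> * of_real (w$2)) * Wsm 1 w ^ Suc j = of_real (1 - w$3^2) * Wsm 1 w ^ j"
    proof -
      have "(of_real (w$1) - \<i> * of_real (w$2)) * Wsm 1 w ^ Suc j
          = ((of_real (w$1) - \<i> * of_real (w$2)) * Wsm 1 w) * Wsm 1 w ^ j"
        by (simp only: power_Suc mult.assoc)
      thus ?thesis unfolding WmWp[OF assms(2)] .
    qed
    have "yc l m * ((of_real (w$1) - \<i> * of_real (w$2)) * cB l m w - (1 + of_real (ys m)) * of_real (w$3) * cA l m w)
       = (-1)^Suc j * of_real (sph_norm l (Suc j)) * (((of_real (w$1) - \<i> * of_real (w$2)) * Wsm 1 w ^ Suc j) * of_real (poly (Q l (Suc (Suc j))) (w$3))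
          - 2 * of_real (w$3) * (of_nat (Suc j) * Wsm 1 w ^ j * of_real (poly (Q l (Suc j)) (w$3))))"
      unfolding cA_def cB_def yc_def e1 using c by (simp add: mult.assoc)
    also have "\<dots> = (-1)^j * of_real (sph_norm l (Suc j)) * Wsm 1 w ^ j *
         of_real (2 * (real j + 1) * w$3 * poly (Q l (Suc j)) (w$3) - (1 - w$3^2) * poly (Q l (Suc (Suc j))) (w$3))"
      unfolding W by (simp add: algebra_simps)
    also have "2 * (real j + 1) * w$3 * poly (Q l (Suc j)) (w$3) - (1 - w$3^2) * poly (Q l (Suc (Suc j))) (w$3)
       = real ((l-j)*(l+j+1)) * poly (Q l j) (w$3)"
      unfolding X using R by (simp add: algebra_simps)
    finally have F: "yc l m * ((of_real (w$1) - \<i> * of_real (w$2)) * cB l m w - (1 + of_real (ys m)) * of_real (w$3) * cA l m w)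
       = (-1)^j * of_real (sph_norm l (Suc j)) * Wsm 1 w ^ j * of_real (real ((l-j)*(l+j+1)) * poly (Q l j) (w$3))" .
    define Xv where "Xv = real ((l-j)*(l+j+1))"
    have sqX: "sqrt Xv * sqrt Xv = Xv" unfolding Xv_def by simp
    have "of_real (lb l m) * sph_Y l (m-1) w =
       of_real (sqrt Xv * sqrt Xv) * ((-1)^j * of_real (sph_norm l (Suc j)) * Wsm 1 w ^ j * of_real (poly (Q l j) (w$3)))"
      unfolding Y_W yc_def e1 L N Xv_def[symmetric] using e1(6) by (simp only: of_real_mult mult_ac if_True)
    thus ?thesis unfolding F Xv_def[symmetric] sqX by (simp add: mult_ac)
  qed
qed


lemma bessel_deriv: "\<exists>D. (sph_bessel_j l has_real_derivative D) (at x)"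
proof -
  have "((\<lambda>x. x^l * G l (x^2)) has_real_derivative
      (real l * x^(l-1) * G l (x^2) + x^l * (- G (Suc l) (x^2) / 2 * (2 * x)))) (at x)"
    by (auto intro!: derivative_eq_intros DERIV_chain2[OF G_deriv] simp: algebra_simps)
  thus ?thesis unfolding bessel_G[abs_def] by blast
qed

lemma phi_deriv:
  fixes c :: real and a :: complex
  shows "\<exists>D. ((\<lambda>r. of_real (sph_bessel_j l (r * c)) * a) has_vector_derivative D) (at r0)"
proof -
  obtain D where D: "(sph_bessel_j l has_real_derivative D) (at (r0 * c))" using bessel_deriv by blast
  have g: "((\<lambda>r. r * c) has_real_derivative c) (at r0)" by (auto intro!: derivative_eq_intros)
  have "((\<lambda>r. sph_bessel_j l (r * c)) has_real_derivative (D * c)) (at r0)"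
    using DERIV_chain2[OF D g] .
  hence "((\<lambda>r. of_real (sph_bessel_j l (r * c)) * a) has_vector_derivative (of_real (D * c) * a)) (at r0)"
    by (intro derivative_eq_intros) auto
  thus ?thesis by blast
qed

lemma phi_deriv2:
  fixes c :: real and a :: complex
  shows "\<exists>D. ((\<lambda>r. of_real (sph_bessel_j l (c * r)) * a) has_vector_derivative D) (at r0)"
  using phi_deriv[of l c a r0] by (simp add: mult.commute)

lemma norm3: "norm (x::real^3) ^ 2 = x$1^2 + x$2^2 + x$3^2"
  by (simp add: norm_vec_def L2_set_def sum_3)

lemma unit3: "(x::real^3) \<noteq> 0 \<Longrightarrow> (x /\<^sub>R norm x)$1^2 + (x /\<^sub>R norm x)$2^2 + (x /\<^sub>R norm x)$3^2 = 1"
  using norm3[of "x /\<^sub>R norm x"] by simp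

lemma ys_sq: "ys m * ys m = 1" by (simp add: ys_def)

lemma ax: "axis (1::3) (1::real) $ 1 = 1" "axis (1::3) (1::real) $ 2 = 0" "axis (1::3) (1::real) $ 3 = 0"
  "axis (2::3) (1::real) $ 1 = 0" "axis (2::3) (1::real) $ 2 = 1" "axis (2::3) (1::real) $ 3 = 0"
  "axis (3::3) (1::real) $ 1 = 0" "axis (3::3) (1::real) $ 2 = 0" "axis (3::3) (1::real) $ 3 = 1"
  by (simp_all add: axis_def)

locale rotsetup =
  fixes \<phi>0 :: "real \<Rightarrow> complex" and l :: nat and m :: int
  assumes dphi: "\<And>r. \<exists>D. (\<phi>0 has_vector_derivative D) (at r)"
    and valid: "\<bar>m\<bar> \<le> int l"
begin

definition Gf :: "int \<Rightarrow> real^3 \<Rightarrow> complex" where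
  "Gf mm y = \<phi>0 (norm y) * sph_Y l mm (y /\<^sub>R norm y)"

definition rt :: "3 \<Rightarrow> 3 \<Rightarrow> real^3 \<Rightarrow> complex" where
  "rt i j x = of_real (x$i) * pd j (Gf m) x - of_real (x$j) * pd i (Gf m) x"

lemma rt_eq:
  assumes "x \<noteq> 0"
  defines "w \<equiv> x /\<^sub>R norm x"
  shows "rt i j x = (\<phi>0 (norm x) * yc l m) *
     (of_real (w$i) * (of_real (axis j 1 $ 1) * cA l m w + of_real (axis j 1 $ 2) * (\<i> * of_real (ys m) * cA l m w) + of_real (axis j 1 $ 3) * cB l m w)
    - of_real (w$j) * (of_real (axis i 1 $ 1) * cA l m w + of_real (axis i 1 $ 2) * (\<i> * of_real (ys m) * cA l m w) + of_real (axis i 1 $ 3) * cB l m w))"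
proof -
  obtain D where D: "(\<phi>0 has_vector_derivative D) (at (norm x))" using dphi by blast
  have D2: "((\<lambda>r. \<phi>0 r * yc l m) has_vector_derivative (D * yc l m)) (at (norm x))"
    by (rule has_vector_derivative_mult_left[OF D])
  have G: "Gf m = (\<lambda>y. (\<phi>0 (norm y) * yc l m) * Hs (ys m) (nat \<bar>m\<bar>) (Q l (nat \<bar>m\<bar>)) (y /\<^sub>R norm y))"
    by (auto simp: Gf_def Y_Hs mult_ac)
  show ?thesis
    unfolding rt_def G rot_F[OF assms(1) D2, of i j "ys m" "nat \<bar>m\<bar>" "Q l (nat \<bar>m\<bar>)"]
    by (simp add: cA_def cB_def Wsm_def w_def Q_Suc)
qed

lemma opZ:
  assumes "x \<noteq> 0"
  shows "-\<i> * rt 1 2 x = of_int m * Gf m x"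
proof -
  define w where "w = x /\<^sub>R norm x"
  have "-\<i> * rt 1 2 x = \<phi>0 (norm x) * (yc l m * (of_real (ys m) * cA l m w * Wsm (ys m) w))"
    unfolding rt_eq[OF assms] w_def[symmetric]
    by (cases "0 \<le> m") (simp_all add: ys_def ax Wsm_def algebra_simps)
  thus ?thesis unfolding coreZ Gf_def w_def by (simp add: mult_ac)
qed

lemma opP:
  assumes "x \<noteq> 0"
  shows "-\<i> * rt 2 3 x + \<i> * (-\<i> * rt 3 1 x) = of_real (la l m) * Gf (m+1) x"
proof -
  define w where "w = x /\<^sub>R norm x"
  have "-\<i> * rt 2 3 x + \<i> * (-\<i> * rt 3 1 x) = \<phi>0 (norm x) * (yc l m * ((1 - of_real (ys m)) * of_real (w$3) * cA l m w - (of_real (w$1) + \<i> * of_real (w$2)) * cB l m w))"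
    unfolding rt_eq[OF assms] w_def[symmetric]
    by (simp add: ax algebra_simps)
  also have "\<dots> = \<phi>0 (norm x) * (of_real (la l m) * sph_Y l (m+1) w)"
    by (simp only: coreP[OF valid unit3[OF assms, folded w_def]])
  finally show ?thesis unfolding Gf_def w_def by (simp add: mult_ac)
qed

lemma opM:
  assumes "x \<noteq> 0"
  shows "-\<i> * rt 2 3 x - \<i> * (-\<i> * rt 3 1 x) = of_real (lb l m) * Gf (m-1) x"
proof -
  define w where "w = x /\<^sub>R norm x"
  have "-\<i> * rt 2 3 x - \<i> * (-\<i> * rt 3 1 x) = \<phi>0 (norm x) * (yc l m * ((of_real (w$1) - \<i> * of_real (w$2)) * cB l m w - (1 + of_real (ys m)) * of_real (w$3) * cA l m w))"
    unfolding rt_eq[OF assms] w_def[symmetric]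
    by (simp add: ax algebra_simps)
  also have "\<dots> = \<phi>0 (norm x) * (of_real (lb l m) * sph_Y l (m-1) w)"
    by (simp only: coreM[OF valid unit3[OF assms, folded w_def]])
  finally show ?thesis unfolding Gf_def w_def by (simp add: mult_ac)
qed

end


definition Lpu :: "phfun \<Rightarrow> phfun" where "Lpu f = (\<lambda>z. opA 2 3 f z + \<i> * opA 3 1 f z)"
definition Lmu :: "phfun \<Rightarrow> phfun" where "Lmu f = (\<lambda>z. opA 2 3 f z - \<i> * opA 3 1 f z)"
definition Lpv :: "phfun \<Rightarrow> phfun" where "Lpv f = (\<lambda>z. opB 2 3 f z + \<i> * opB 3 1 f z)"
definition Lmv :: "phfun \<Rightarrow> phfun" where "Lmv f = (\<lambda>z. opB 2 3 f z - \<i> * opB 3 1 f z)"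

lemma bessel_zero: "l \<ge> 1 \<Longrightarrow> sph_bessel_j l 0 = 0"
  by (simp add: bessel_G)

lemma Psi_u0: "l \<ge> 1 \<Longrightarrow> Psi l m n (0, v) = 0"
  by (simp add: Psi_def bessel_zero)

lemma Psi_v0: "l \<ge> 1 \<Longrightarrow> Psi l m n (u, 0) = 0"
  by (simp add: Psi_def bessel_zero)

lemma l0_cases: "\<bar>m\<bar> \<le> int l \<Longrightarrow> l = 0 \<Longrightarrow> m = 0" by simp

lemma la00: "la 0 0 = 0" by (simp add: la_def)
lemma lb00: "lb 0 0 = 0" by (simp add: lb_def)

lemma psi_u_ops:
  assumes valid: "\<bar>m\<bar> \<le> int l"
  shows "opA 1 2 (Psi l m n) = (\<lambda>z. of_int m * Psi l m n z)"
    "Lpu (Psi l m n) = (\<lambda>z. of_real (la l m) * Psi l (m+1) n z)"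
    "Lmu (Psi l m n) = (\<lambda>z. of_real (lb l m) * Psi l (m-1) n z)"
proof -
  have main: "opA 1 2 (Psi l m n) (u,v) = of_int m * Psi l m n (u,v) \<and>
     Lpu (Psi l m n) (u,v) = of_real (la l m) * Psi l (m+1) n (u,v) \<and>
     Lmu (Psi l m n) (u,v) = of_real (lb l m) * Psi l (m-1) n (u,v)" for u v
  proof -
    define \<phi>0 where "\<phi>0 = (\<lambda>r. of_real (sph_bessel_j l (r * norm v)) * sph_Y l n (v /\<^sub>R norm v))"
    interpret R: rotsetup \<phi>0 l m
      by unfold_locales (auto simp: \<phi>0_def phi_deriv valid)
    have G: "R.Gf mm = (\<lambda>y. Psi l mm n (y, v))" for mm
      by (rule ext) (simp only: R.Gf_def, simp add: Psi_def \<phi>0_def mult_ac)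
    have opA_rt: "opA i j (Psi l m n) (u,v) = -\<i> * R.rt i j u" for i j
      unfolding opA_def R.rt_def G du_pd by simp
    show ?thesis
    proof (cases "u = 0")
      case False
      show ?thesis unfolding Lpu_def Lmu_def opA_rt
        using R.opZ[OF False] R.opP[OF False] R.opM[OF False] unfolding G by simp
    next
      case True
      have z: "opA i j (Psi l m n) (u,v) = 0" for i j
        unfolding opA_def True by simp
      show ?thesis
      proof (cases "l = 0")
        case True
        hence "m = 0" using valid by simp
        thus ?thesis unfolding Lpu_def Lmu_def z using True by (simp add: la00 lb00)
      next
        case False
        hence "l \<ge> 1" by simp
        thus ?thesis unfolding Lpu_def Lmu_def z using \<open>u = 0\<close> by (simp add: Psi_u0)
      qed
    qed
  qed
  show "opA 1 2 (Psi l m n) = (\<lambda>z. of_int m * Psi l m n z)"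
    using main by (auto simp: fun_eq_iff)
  show "Lpu (Psi l m n) = (\<lambda>z. of_real (la l m) * Psi l (m+1) n z)"
    using main by (auto simp: fun_eq_iff)
  show "Lmu (Psi l m n) = (\<lambda>z. of_real (lb l m) * Psi l (m-1) n z)"
    using main by (auto simp: fun_eq_iff)
qed

lemma psi_v_ops:
  assumes valid: "\<bar>n\<bar> \<le> int l"
  shows "opB 1 2 (Psi l m n) = (\<lambda>z. of_int n * Psi l m n z)"
    "Lpv (Psi l m n) = (\<lambda>z. of_real (la l n) * Psi l m (n+1) z)"
    "Lmv (Psi l m n) = (\<lambda>z. of_real (lb l n) * Psi l m (n-1) z)"
proof -
  have main: "opB 1 2 (Psi l m n) (u,v) = of_int n * Psi l m n (u,v) \<and>
     Lpv (Psi l m n) (u,v) = of_real (la l n) * Psi l m (n+1) (u,v) \<and>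
     Lmv (Psi l m n) (u,v) = of_real (lb l n) * Psi l m (n-1) (u,v)" for u v
  proof -
    define \<phi>0 where "\<phi>0 = (\<lambda>r. of_real (sph_bessel_j l (norm u * r)) * sph_Y l m (u /\<^sub>R norm u))"
    interpret R: rotsetup \<phi>0 l n
      by unfold_locales (auto simp: \<phi>0_def phi_deriv2 valid)
    have G: "R.Gf nn = (\<lambda>y. Psi l m nn (u, y))" for nn
      by (rule ext) (simp only: R.Gf_def, simp add: Psi_def \<phi>0_def mult_ac)
    have opB_rt: "opB i j (Psi l m n) (u,v) = -\<i> * R.rt i j v" for i j
      unfolding opB_def R.rt_def G dv_pd by simp
    show ?thesis
    proof (cases "v = 0")
      case False
      show ?thesis unfolding Lpv_def Lmv_def opB_rt
        using R.opZ[OF False] R.opP[OF False] R.opM[OF False] unfolding G by simp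
    next
      case True
      have z: "opB i j (Psi l m n) (u,v) = 0" for i j
        unfolding opB_def True by simp
      show ?thesis
      proof (cases "l = 0")
        case True
        hence "n = 0" using valid by simp
        thus ?thesis unfolding Lpv_def Lmv_def z using True by (simp add: la00 lb00)
      next
        case False
        hence "l \<ge> 1" by simp
        thus ?thesis unfolding Lpv_def Lmv_def z using \<open>v = 0\<close> by (simp add: Psi_v0)
      qed
    qed
  qed
  show "opB 1 2 (Psi l m n) = (\<lambda>z. of_int n * Psi l m n z)"
    using main by (auto simp: fun_eq_iff)
  show "Lpv (Psi l m n) = (\<lambda>z. of_real (la l n) * Psi l m (n+1) z)"
    using main by (auto simp: fun_eq_iff)
  show "Lmv (Psi l m n) = (\<lambda>z. of_real (lb l n) * Psi l m (n-1) z)"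
    using main by (auto simp: fun_eq_iff)
qed


definition nsq :: "real^3 \<Rightarrow> real" where "nsq y = y$1^2 + y$2^2 + y$3^2"
definition Pp :: "real^3 \<Rightarrow> complex" where "Pp y = of_real (y$1) + \<i> * of_real (y$2)"

lemma nsq_norm: "nsq y = norm y ^ 2" by (simp add: nsq_def norm3)

lemma radial_Pp: "of_real (norm u) ^ l * Wsm 1 (u /\<^sub>R norm u) ^ l = Pp u ^ l"
proof (cases "u = 0")
  case True thus ?thesis by (cases l) (simp_all add: Pp_def Wsm_def)
next
  case False
  hence nz: "(of_real (norm u) :: complex) \<noteq> 0" by simp
  have "Wsm 1 (u /\<^sub>R norm u) = Pp u / of_real (norm u)"
    unfolding Wsm_def Pp_def comp_div by (simp add: add_divide_distrib)
  thus ?thesis using nz by (simp add: power_divide)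
qed

lemma comp3: "((u::real^3) /\<^sub>R norm u) $ 3 = u$3 / norm u"
  by (rule comp_div)

lemma radial_q1: "norm u * poly (Q (Suc l) l) ((u /\<^sub>R norm u) $ 3) = c0 (Suc l) * u$3"
  by (cases "u = 0") (simp_all add: poly_Q_sub1 comp3)

lemma radial_q2: "norm u ^ 2 * poly (Q (Suc (Suc l)) l) ((u /\<^sub>R norm u) $ 3)
   = c0 (Suc (Suc l)) / (4*real l+6) * ((2*real l+3) * u$3^2 - nsq u)"
proof (cases "u = 0")
  case True thus ?thesis by (simp add: nsq_def)
next
  case False
  hence nz: "norm u \<noteq> 0" by simp
  have e0: "norm u^2 * (u$3^2/norm u^2) = u$3^2" using nz by simp
  have "norm u^2 * ((2*real l+3)*(u$3/norm u)^2 - 1) = (2*real l+3)*(norm u^2 * (u$3^2/norm u^2)) - norm u^2"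
    by (simp only: power_divide right_diff_distrib mult.left_commute mult_1_right)
  hence e: "norm u^2 * ((2*real l+3)*(u$3/norm u)^2 - 1) = (2*real l+3)*u$3^2 - norm u^2"
    unfolding e0 .
  have "norm u ^ 2 * poly (Q (Suc (Suc l)) l) ((u /\<^sub>R norm u) $ 3)
     = c0 (Suc (Suc l)) / (4*real l+6) * (norm u^2 * ((2*real l+3)*(u$3/norm u)^2 - 1))"
    unfolding poly_Q_sub2 comp3 by simp
  thus ?thesis unfolding e nsq_norm .
qed

lemma Y_top: "sph_Y L l w = (-1)^l * of_real (sph_norm L l) * Wsm 1 w ^ l * of_real (poly (Q L l) (w$3))"
  by (simp add: Y_W yc_def ys_def)

lemma bessel_uv: "sph_bessel_j L (norm u * norm v) = norm u ^ L * norm v ^ L * G L (nsq u * nsq v)"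
  by (simp add: bessel_G nsq_norm power_mult_distrib)

definition k0 :: "nat \<Rightarrow> real" where "k0 l = sph_norm l l ^2 * c0 l ^2"
definition k1 :: "nat \<Rightarrow> real" where "k1 l = sph_norm (Suc l) l ^2 * c0 (Suc l) ^2"
definition k2 :: "nat \<Rightarrow> real" where "k2 l = sph_norm (Suc (Suc l)) l ^2 * (c0 (Suc (Suc l)) / (4*real l+6)) ^2"

lemma m1sq: "((-1::complex)^l) * (-1)^l = 1"
  by (simp add: power_mult_distrib[symmetric])

lemma Psi_top0: "Psi l (int l) (int l) (u,v) = of_real (k0 l) * Pp u ^ l * Pp v ^ l * of_real (G l (nsq u * nsq v))"
proof -
  have "Psi l (int l) (int l) (u,v) = of_real (G l (nsq u * nsq v)) * ((-1)^l * (-1)^l) * of_real (sph_norm l l)^2 * of_real (c0 l)^2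
     * (of_real (norm u) ^ l * Wsm 1 (u /\<^sub>R norm u) ^ l) * (of_real (norm v) ^ l * Wsm 1 (v /\<^sub>R norm v) ^ l)"
    unfolding Psi_def by (simp add: Y_top bessel_uv power2_eq_square mult_ac)
  thus ?thesis unfolding radial_Pp m1sq k0_def by (simp add: mult_ac)
qed

lemma Psi_top1: "Psi (Suc l) (int l) (int l) (u,v) = of_real (k1 l) * Pp u ^ l * Pp v ^ l * of_real (u$3 * v$3 * G (Suc l) (nsq u * nsq v))"
proof -
  have "Psi (Suc l) (int l) (int l) (u,v) = of_real (G (Suc l) (nsq u * nsq v)) * ((-1)^l * (-1)^l) * of_real (sph_norm (Suc l) l)^2
     * (of_real (norm u) ^ l * Wsm 1 (u /\<^sub>R norm u) ^ l) * (of_real (norm v) ^ l * Wsm 1 (v /\<^sub>R norm v) ^ l)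
     * of_real (norm u * poly (Q (Suc l) l) ((u /\<^sub>R norm u) $ 3)) * of_real (norm v * poly (Q (Suc l) l) ((v /\<^sub>R norm v) $ 3))"
    unfolding Psi_def by (simp add: Y_top bessel_uv power2_eq_square mult_ac)
  thus ?thesis unfolding radial_Pp m1sq k1_def radial_q1 by (simp add: mult_ac power2_eq_square)
qed

lemma Psi_top2: "Psi (Suc (Suc l)) (int l) (int l) (u,v) = of_real (k2 l) * Pp u ^ l * Pp v ^ l *
   of_real (((2*real l+3) * u$3^2 - nsq u) * ((2*real l+3) * v$3^2 - nsq v) * G (Suc (Suc l)) (nsq u * nsq v))"
proof -
  have "Psi (Suc (Suc l)) (int l) (int l) (u,v) = of_real (G (Suc (Suc l)) (nsq u * nsq v)) * ((-1)^l * (-1)^l) * of_real (sph_norm (Suc (Suc l)) l)^2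
     * (of_real (norm u) ^ l * Wsm 1 (u /\<^sub>R norm u) ^ l) * (of_real (norm v) ^ l * Wsm 1 (v /\<^sub>R norm v) ^ l)
     * of_real (norm u ^ 2 * poly (Q (Suc (Suc l)) l) ((u /\<^sub>R norm u) $ 3)) * of_real (norm v ^ 2 * poly (Q (Suc (Suc l)) l) ((v /\<^sub>R norm v) $ 3))"
    unfolding Psi_def by (simp add: Y_top bessel_uv power2_eq_square mult_ac)
  thus ?thesis unfolding radial_Pp m1sq k2_def radial_q2 by (simp add: mult_ac power2_eq_square)
qed


lemma line3: "(x + t *\<^sub>R axis (3::3) (1::real)) $ (1::3) = x$1" "(x + t *\<^sub>R axis (3::3) (1::real)) $ (2::3) = x$2"
   "(x + t *\<^sub>R axis (3::3) (1::real)) $ (3::3) = x$3 + t" for x :: "real^3"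
  by (simp_all add: ax)

lemma nsq_line: "nsq (x + t *\<^sub>R axis (3::3) (1::real)) = x$1^2 + x$2^2 + (x$3 + t)^2"
  by (simp add: nsq_def ax)

lemma Pp_line: "Pp (x + t *\<^sub>R axis (3::3) (1::real)) = Pp x"
  by (simp add: Pp_def ax)

lemma G_chain[derivative_intros]:
  "(g has_real_derivative g') (at x) \<Longrightarrow> ((\<lambda>t. G l (g t)) has_real_derivative (- G (Suc l) (g x) / 2 * g')) (at x)"
  by (rule DERIV_chain2[OF G_deriv])

lemma pd3_const:
  assumes "((\<lambda>t. F (x + t *\<^sub>R axis 3 1)) has_real_derivative D) (at 0)"
  shows "pd 3 (\<lambda>y. c * Pp y ^ l * of_real (F y)) x = c * Pp x ^ l * of_real D"
proof -
  have "((\<lambda>t. c * Pp x ^ l * of_real (F (x + t *\<^sub>R axis 3 1))) has_vector_derivative (c * Pp x ^ l * of_real D)) (at 0)"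
    by (intro has_vector_derivative_mult_right has_vector_derivative_of_real assms)
  thus ?thesis unfolding pd_def Pp_line by (rule vector_derivative_at)
qed

lemma C33_gen:
  fixes F Fv Fuv :: "real^3 \<Rightarrow> real^3 \<Rightarrow> real"
  assumes h1: "\<And>u v. ((\<lambda>t. F u (v + t *\<^sub>R axis 3 1)) has_real_derivative Fv u v) (at 0)"
    and h2: "\<And>u v. ((\<lambda>t. Fv (u + t *\<^sub>R axis 3 1) v) has_real_derivative Fuv u v) (at 0)"
  shows "opC 3 3 (\<lambda>(u,v). K * Pp u ^ l * Pp v ^ l * of_real (F u v)) (u,v)
     = K * Pp u^l * Pp v^l * of_real (u$3 * v$3 * F u v + Fuv u v)"
proof -
  have dv: "dv 3 (\<lambda>(u,v). K * Pp u ^ l * Pp v ^ l * of_real (F u v)) = (\<lambda>(u,v). K * Pp u ^ l * Pp v ^ l * of_real (Fv u v))"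
  proof (rule ext, clarify)
    fix u v :: "real^3"
    show "dv 3 (\<lambda>(u,v). K * Pp u ^ l * Pp v ^ l * of_real (F u v)) (u,v) = K * Pp u ^ l * Pp v ^ l * of_real (Fv u v)"
      unfolding dv_pd using pd3_const[OF h1[of u v], of "K * Pp u ^ l" l] by simp
  qed
  have du: "du 3 (\<lambda>(u,v). K * Pp u ^ l * Pp v ^ l * of_real (Fv u v)) (u,v) = K * Pp u ^ l * Pp v ^ l * of_real (Fuv u v)"
  proof -
    have e: "(\<lambda>y. (\<lambda>(u,v). K * Pp u ^ l * Pp v ^ l * of_real (Fv u v)) (y, v)) = (\<lambda>y. (K * Pp v ^ l) * Pp y ^ l * of_real (Fv y v))"
      by (auto simp: mult_ac)
    show ?thesis unfolding du_pd e pd3_const[OF h2[of u v]] by (simp add: mult_ac)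
  qed
  show ?thesis unfolding opC_def dv using du by (simp add: algebra_simps)
qed

lemma nsq_expand: "nsq x = x$1^2 + x$2^2 + x$3^2" by (simp add: nsq_def)

lemma k_pos: "k0 l > 0" "k1 l > 0" "k2 l > 0"
proof -
  have a: "sph_norm l l > 0" "sph_norm (Suc l) l > 0" "sph_norm (Suc (Suc l)) l > 0"
    by (auto intro: sph_norm_pos)
  have b: "c0 l > 0" "c0 (Suc l) > 0" "c0 (Suc (Suc l)) / (4*real l+6) > 0"
    by (auto intro!: c0_pos divide_pos_pos)
  show "k0 l > 0" "k1 l > 0" unfolding k0_def k1_def using a b by auto
  show "k2 l > 0" unfolding k2_def by (intro mult_pos_pos zero_less_power a b)
qed

lemma nsq_deriv: "((\<lambda>t. nsq (x + t *\<^sub>R axis 3 1)) has_real_derivative (2 * x$3)) (at 0)"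
  unfolding nsq_line by (auto intro!: derivative_eq_intros)

lemma Psi_top0_fun: "Psi l (int l) (int l) = (\<lambda>(u,v). of_real (k0 l) * Pp u ^ l * Pp v ^ l * of_real (G l (nsq u * nsq v)))"
  by (auto simp: Psi_top0)

lemma Psi_top1_fun: "Psi (Suc l) (int l) (int l) = (\<lambda>(u,v). of_real (k1 l) * Pp u ^ l * Pp v ^ l * of_real (u$3 * v$3 * G (Suc l) (nsq u * nsq v)))"
  by (auto simp: Psi_top1)

lemma C33_top0: "opC 3 3 (Psi l (int l) (int l)) = (\<lambda>z. of_real ((2*real l+1) * k0 l / k1 l) * Psi (Suc l) (int l) (int l) z)"
proof (rule ext, clarify)
  fix u v :: "real^3"
  define S where "S = (\<lambda>u v. nsq u * nsq v)"
  have h1: "((\<lambda>t. G l (nsq u * nsq (v + t *\<^sub>R axis 3 1))) has_real_derivative (- nsq u * v$3 * G (Suc l) (nsq u * nsq v))) (at 0)" for u v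
    by (auto intro!: derivative_eq_intros nsq_deriv simp: algebra_simps)
  have h2: "((\<lambda>t. - nsq (u + t *\<^sub>R axis 3 1) * v$3 * G (Suc l) (nsq (u + t *\<^sub>R axis 3 1) * nsq v)) has_real_derivative
      (-2 * u$3 * v$3 * G (Suc l) (nsq u * nsq v) + u$3 * v$3 * (nsq u * nsq v) * G (Suc (Suc l)) (nsq u * nsq v))) (at 0)" for u v
    by (auto intro!: derivative_eq_intros nsq_deriv simp: algebra_simps)
  have C: "opC 3 3 (Psi l (int l) (int l)) (u,v) = of_real (k0 l) * Pp u ^ l * Pp v ^ l *
      of_real (u$3 * v$3 * G l (nsq u * nsq v) + (-2 * u$3 * v$3 * G (Suc l) (nsq u * nsq v) + u$3 * v$3 * (nsq u * nsq v) * G (Suc (Suc l)) (nsq u * nsq v)))"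
    unfolding Psi_top0_fun
    by (rule C33_gen[where F = "\<lambda>u v. G l (nsq u * nsq v)" and Fv = "\<lambda>u v. - nsq u * v$3 * G (Suc l) (nsq u * nsq v)"])
       (use h1 h2 in auto)
  have R: "G l (nsq u * nsq v) + (nsq u * nsq v) * G (Suc (Suc l)) (nsq u * nsq v) = (2*real l+3) * G (Suc l) (nsq u * nsq v)"
    using G_rec[of l "nsq u * nsq v"] by (simp add: numeral_2_eq_2)
  have "u$3 * v$3 * G l (nsq u * nsq v) + (-2 * u$3 * v$3 * G (Suc l) (nsq u * nsq v) + u$3 * v$3 * (nsq u * nsq v) * G (Suc (Suc l)) (nsq u * nsq v))
     = (2*real l+1) * (u$3 * v$3 * G (Suc l) (nsq u * nsq v))"
    using R by algebra
  moreover have "k1 l \<noteq> 0" using k_pos(2)[of l] by simp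
  ultimately show "opC 3 3 (Psi l (int l) (int l)) (u,v) = of_real ((2*real l+1) * k0 l / k1 l) * Psi (Suc l) (int l) (int l) (u,v)"
    unfolding C Psi_top1 by (simp add: field_simps)
qed

lemma top1_alg:
  fixes g0 g1 g2 g3 a b nu nv c :: real
  assumes "g0 + nu*nv*g2 = c * g1" "g1 + nu*nv*g3 = (c+2) * g2"
  shows "c * (a*b*(a*b*g1) + (g1 - a^2*nv*g2 - b^2*nu*g2 - 2*a^2*b^2*g2 + a^2*b^2*(nu*nv)*g3))
       = g0 + (c*a^2 - nu)*(c*b^2 - nv)*g2"
  using assms by algebra

lemma C33_top1: "opC 3 3 (Psi (Suc l) (int l) (int l)) = (\<lambda>z.
    of_real (k1 l / ((2*real l+3) * k0 l)) * Psi l (int l) (int l) z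
  + of_real (k1 l / ((2*real l+3) * k2 l)) * Psi (Suc (Suc l)) (int l) (int l) z)"
proof (rule ext, clarify)
  fix u v :: "real^3"
  have h1: "((\<lambda>t. u$3 * (v + t *\<^sub>R axis 3 1)$3 * G (Suc l) (nsq u * nsq (v + t *\<^sub>R axis 3 1))) has_real_derivative
      (u$3 * G (Suc l) (nsq u * nsq v) - u$3 * v$3^2 * nsq u * G (Suc (Suc l)) (nsq u * nsq v))) (at 0)" for u v
    unfolding line3 by (auto intro!: derivative_eq_intros nsq_deriv simp: algebra_simps power2_eq_square)
  have h2: "((\<lambda>t. (u + t *\<^sub>R axis 3 1)$3 * G (Suc l) (nsq (u + t *\<^sub>R axis 3 1) * nsq v)
        - (u + t *\<^sub>R axis 3 1)$3 * v$3^2 * nsq (u + t *\<^sub>R axis 3 1) * G (Suc (Suc l)) (nsq (u + t *\<^sub>R axis 3 1) * nsq v)) has_real_derivative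
      (G (Suc l) (nsq u * nsq v) - u$3^2 * nsq v * G (Suc (Suc l)) (nsq u * nsq v) - v$3^2 * nsq u * G (Suc (Suc l)) (nsq u * nsq v)
        - 2 * u$3^2 * v$3^2 * G (Suc (Suc l)) (nsq u * nsq v) + u$3^2 * v$3^2 * (nsq u * nsq v) * G (Suc (Suc (Suc l))) (nsq u * nsq v))) (at 0)" for u v
    unfolding line3 by (auto intro!: derivative_eq_intros nsq_deriv simp: algebra_simps power2_eq_square)
  have C: "opC 3 3 (Psi (Suc l) (int l) (int l)) (u,v) = of_real (k1 l) * Pp u ^ l * Pp v ^ l *
      of_real (u$3 * v$3 * (u$3 * v$3 * G (Suc l) (nsq u * nsq v)) +
       (G (Suc l) (nsq u * nsq v) - u$3^2 * nsq v * G (Suc (Suc l)) (nsq u * nsq v) - v$3^2 * nsq u * G (Suc (Suc l)) (nsq u * nsq v)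
        - 2 * u$3^2 * v$3^2 * G (Suc (Suc l)) (nsq u * nsq v) + u$3^2 * v$3^2 * (nsq u * nsq v) * G (Suc (Suc (Suc l))) (nsq u * nsq v)))"
    unfolding Psi_top1_fun
    by (rule C33_gen[where F = "\<lambda>u v. u$3 * v$3 * G (Suc l) (nsq u * nsq v)"
          and Fv = "\<lambda>u v. u$3 * G (Suc l) (nsq u * nsq v) - u$3 * v$3^2 * nsq u * G (Suc (Suc l)) (nsq u * nsq v)"])
       (use h1 h2 in auto)
  define c where "c = 2*real l+3"
  have R0: "G l (nsq u * nsq v) + nsq u * nsq v * G (Suc (Suc l)) (nsq u * nsq v) = c * G (Suc l) (nsq u * nsq v)"
    using G_rec[of l "nsq u * nsq v"] by (simp add: numeral_2_eq_2 c_def)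
  have R1: "G (Suc l) (nsq u * nsq v) + nsq u * nsq v * G (Suc (Suc (Suc l))) (nsq u * nsq v) = (c+2) * G (Suc (Suc l)) (nsq u * nsq v)"
    using G_rec[of "Suc l" "nsq u * nsq v"] by (simp add: numeral_2_eq_2 c_def algebra_simps)
  have A: "c * (u$3 * v$3 * (u$3 * v$3 * G (Suc l) (nsq u * nsq v)) +
       (G (Suc l) (nsq u * nsq v) - u$3^2 * nsq v * G (Suc (Suc l)) (nsq u * nsq v) - v$3^2 * nsq u * G (Suc (Suc l)) (nsq u * nsq v)
        - 2 * u$3^2 * v$3^2 * G (Suc (Suc l)) (nsq u * nsq v) + u$3^2 * v$3^2 * (nsq u * nsq v) * G (Suc (Suc (Suc l))) (nsq u * nsq v)))
     = G l (nsq u * nsq v) + (c * u$3^2 - nsq u) * (c * v$3^2 - nsq v) * G (Suc (Suc l)) (nsq u * nsq v)"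
    by (rule top1_alg[OF R0 R1])
  have nz: "k0 l \<noteq> 0" "k2 l \<noteq> 0" "c \<noteq> 0" using k_pos[of l] unfolding c_def by auto
  show "opC 3 3 (Psi (Suc l) (int l) (int l)) (u,v) =
    of_real (k1 l / ((2*real l+3) * k0 l)) * Psi l (int l) (int l) (u,v)
  + of_real (k1 l / ((2*real l+3) * k2 l)) * Psi (Suc (Suc l)) (int l) (int l) (u,v)"
    unfolding C Psi_top0 Psi_top2 c_def[symmetric]
  proof -
    define X where "X = u$3 * v$3 * (u$3 * v$3 * G (Suc l) (nsq u * nsq v)) +
       (G (Suc l) (nsq u * nsq v) - u$3^2 * nsq v * G (Suc (Suc l)) (nsq u * nsq v) - v$3^2 * nsq u * G (Suc (Suc l)) (nsq u * nsq v)
        - 2 * u$3^2 * v$3^2 * G (Suc (Suc l)) (nsq u * nsq v) + u$3^2 * v$3^2 * (nsq u * nsq v) * G (Suc (Suc (Suc l))) (nsq u * nsq v))"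
    have AX: "X = (G l (nsq u * nsq v) + (c * u$3^2 - nsq u) * (c * v$3^2 - nsq v) * G (Suc (Suc l)) (nsq u * nsq v)) / c"
      using A nz(3) unfolding X_def[symmetric] by (simp add: field_simps)
    show "of_real (k1 l) * Pp u ^ l * Pp v ^ l * of_real X =
      of_real (k1 l / (c * k0 l)) * (of_real (k0 l) * Pp u ^ l * Pp v ^ l * of_real (G l (nsq u * nsq v))) +
      of_real (k1 l / (c * k2 l)) * (of_real (k2 l) * Pp u ^ l * Pp v ^ l *
        of_real ((c * u$3^2 - nsq u) * (c * v$3^2 - nsq v) * G (Suc (Suc l)) (nsq u * nsq v)))"
      unfolding AX using nz by (simp add: field_simps)
  qed
qed


lemma Psi_high_m: "nat \<bar>m\<bar> > l \<Longrightarrow> Psi l m n = (\<lambda>x. 0)"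
  by (auto simp: Psi_def Y_high fun_eq_iff)

lemma Psi_high_n: "nat \<bar>n\<bar> > l \<Longrightarrow> Psi l m n = (\<lambda>x. 0)"
  by (auto simp: Psi_def Y_high fun_eq_iff)

lemma V_zero: "(\<lambda>x. 0) \<in> Vphys"
  unfolding Vphys_def by (rule CollectI, rule exI[of _ "{}"]) auto

lemma V_Psi: "Psi l m n \<in> Vphys"
proof (cases "(l,m,n) \<in> valid_idx")
  case True
  show ?thesis unfolding Vphys_def
    by (rule CollectI, rule exI[of _ "{(l,m,n)}"], rule exI[of _ "\<lambda>_. 1"]) (use True in auto)
next
  case False
  hence "nat \<bar>m\<bar> > l \<or> nat \<bar>n\<bar> > l" by (auto simp: valid_idx_def)
  hence "Psi l m n = (\<lambda>x. 0)" using Psi_high_m Psi_high_n by blast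
  thus ?thesis using V_zero by simp
qed

lemma V_smult: "f \<in> Vphys \<Longrightarrow> (\<lambda>x. c * f x) \<in> Vphys"
proof -
  assume "f \<in> Vphys"
  then obtain S d where "finite S \<and> S \<subseteq> valid_idx \<and> f = (\<lambda>x. \<Sum>(l,m,n)\<in>S. d (l,m,n) * Psi l m n x)"
    unfolding Vphys_def mem_Collect_eq by (elim exE)
  hence S: "finite S" "S \<subseteq> valid_idx" "f = (\<lambda>x. \<Sum>(l,m,n)\<in>S. d (l,m,n) * Psi l m n x)" by auto
  have "(\<lambda>x. c * f x) = (\<lambda>x. \<Sum>(l,m,n)\<in>S. (\<lambda>i. c * d i) (l,m,n) * Psi l m n x)"
    unfolding S(3) by (simp add: sum_distrib_left case_prod_beta mult.assoc)
  thus ?thesis unfolding Vphys_def mem_Collect_eq using S(1,2) by (intro exI conjI)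
qed

lemma V_add: "f \<in> Vphys \<Longrightarrow> g \<in> Vphys \<Longrightarrow> (\<lambda>x. f x + g x) \<in> Vphys"
proof -
  assume a: "f \<in> Vphys" "g \<in> Vphys"
  from a(1) obtain S d where "finite S \<and> S \<subseteq> valid_idx \<and> f = (\<lambda>x. \<Sum>(l,m,n)\<in>S. d (l,m,n) * Psi l m n x)"
    unfolding Vphys_def mem_Collect_eq by (elim exE)
  hence S: "finite S" "S \<subseteq> valid_idx" "f = (\<lambda>x. \<Sum>(l,m,n)\<in>S. d (l,m,n) * Psi l m n x)" by auto
  from a(2) obtain T e where "finite T \<and> T \<subseteq> valid_idx \<and> g = (\<lambda>x. \<Sum>(l,m,n)\<in>T. e (l,m,n) * Psi l m n x)"
    unfolding Vphys_def mem_Collect_eq by (elim exE)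
  hence T: "finite T" "T \<subseteq> valid_idx" "g = (\<lambda>x. \<Sum>(l,m,n)\<in>T. e (l,m,n) * Psi l m n x)" by auto
  define d' where "d' = (\<lambda>i. if i \<in> S then d i else 0)"
  define e' where "e' = (\<lambda>i. if i \<in> T then e i else 0)"
  have f: "f x = (\<Sum>i\<in>S \<union> T. d' i * Psi (fst i) (fst (snd i)) (snd (snd i)) x)" for x
  proof -
    have "f x = (\<Sum>i\<in>S. d' i * Psi (fst i) (fst (snd i)) (snd (snd i)) x)"
      unfolding S(3) d'_def by (auto simp: case_prod_beta intro!: sum.cong)
    also have "\<dots> = (\<Sum>i\<in>S \<union> T. d' i * Psi (fst i) (fst (snd i)) (snd (snd i)) x)"
      by (rule sum.mono_neutral_left) (auto simp: S(1) T(1) d'_def)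
    finally show ?thesis .
  qed
  have g: "g x = (\<Sum>i\<in>S \<union> T. e' i * Psi (fst i) (fst (snd i)) (snd (snd i)) x)" for x
  proof -
    have "g x = (\<Sum>i\<in>T. e' i * Psi (fst i) (fst (snd i)) (snd (snd i)) x)"
      unfolding T(3) e'_def by (auto simp: case_prod_beta intro!: sum.cong)
    also have "\<dots> = (\<Sum>i\<in>S \<union> T. e' i * Psi (fst i) (fst (snd i)) (snd (snd i)) x)"
      by (rule sum.mono_neutral_left) (auto simp: S(1) T(1) e'_def)
    finally show ?thesis .
  qed
  have "(\<lambda>x. f x + g x) = (\<lambda>x. \<Sum>(l,m,n)\<in>S \<union> T. (\<lambda>i. d' i + e' i) (l,m,n) * Psi l m n x)"
    unfolding f g by (simp add: case_prod_beta sum.distrib[symmetric] distrib_right)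
  moreover have "finite (S \<union> T)" "S \<union> T \<subseteq> valid_idx" using S T by auto
  ultimately show ?thesis unfolding Vphys_def mem_Collect_eq by (intro exI conjI)
qed


lemma sph_norm_sq: "sph_norm l k ^ 2 = (2 * real l + 1) / (4 * pi) * fact (l - k) / fact (l + k)"
  unfolding sph_norm_def by (rule real_sqrt_pow2) simp

lemma k1_k0: "k1 l = (2*real l+3) * k0 l"
proof -
  have e1: "l + l = 2*l" "Suc l + l = Suc (2*l)" "Suc l - l = 1" by simp_all
  have a: "sph_norm l l ^ 2 = (2 * real l + 1) / (4 * pi) / fact (2*l)"
    using sph_norm_sq[of l l] unfolding e1 by simp
  have b: "sph_norm (Suc l) l ^ 2 = (2 * real (Suc l) + 1) / (4 * pi) / fact (Suc (2*l))"
    using sph_norm_sq[of "Suc l" l] unfolding e1 by simp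
  have f: "(fact (Suc (2*l)) :: real) = (2*real l+1) * fact (2*l)" by (simp add: fact_Suc)
  define F where "F = (fact (2*l) :: real)"
  define d where "d = 2*real l+1"
  have p: "F \<noteq> 0" "d \<noteq> 0" "pi \<noteq> 0" unfolding F_def d_def by auto
  have e: "2 * real (Suc l) + 1 = d + 2" "2 * real l + 3 = d + 2" unfolding d_def by simp_all
  show ?thesis unfolding k0_def k1_def a b c0_Suc f F_def[symmetric] d_def[symmetric] e using p
    by (simp add: field_simps power2_eq_square)
qed

locale ipctx =
  fixes ip :: "phfun \<Rightarrow> phfun \<Rightarrow> complex"
  assumes IP: "is_inner_product_on Vphys ip"
    and SA: "\<And>i j. symmetric_on Vphys ip (opA i j)"
    and SB: "\<And>i j. symmetric_on Vphys ip (opB i j)"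
    and SC: "\<And>i j. symmetric_on Vphys ip (opC i j)"
begin

lemma add1: "f \<in> Vphys \<Longrightarrow> g \<in> Vphys \<Longrightarrow> h \<in> Vphys \<Longrightarrow> ip (\<lambda>x. f x + g x) h = ip f h + ip g h"
  using IP unfolding is_inner_product_on_def by blast
lemma smult1: "f \<in> Vphys \<Longrightarrow> g \<in> Vphys \<Longrightarrow> ip (\<lambda>x. c * f x) g = c * ip f g"
  using IP unfolding is_inner_product_on_def by blast
lemma conj: "f \<in> Vphys \<Longrightarrow> g \<in> Vphys \<Longrightarrow> ip g f = cnj (ip f g)"
  using IP unfolding is_inner_product_on_def by blast
lemma pos: "f \<in> Vphys \<Longrightarrow> f \<noteq> (\<lambda>x. 0) \<Longrightarrow> 0 < Re (ip f f)"
  using IP unfolding is_inner_product_on_def by blast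

lemma smult2: "f \<in> Vphys \<Longrightarrow> g \<in> Vphys \<Longrightarrow> ip f (\<lambda>x. c * g x) = cnj c * ip f g"
proof -
  assume a: "f \<in> Vphys" "g \<in> Vphys"
  have "ip f (\<lambda>x. c * g x) = cnj (ip (\<lambda>x. c * g x) f)" by (rule conj[OF V_smult[OF a(2)] a(1)])
  also have "\<dots> = cnj (c * ip g f)" using smult1[OF a(2) a(1)] by simp
  also have "\<dots> = cnj c * ip f g" using conj[OF a] by simp
  finally show ?thesis .
qed

lemma add2: "f \<in> Vphys \<Longrightarrow> g \<in> Vphys \<Longrightarrow> h \<in> Vphys \<Longrightarrow> ip f (\<lambda>x. g x + h x) = ip f g + ip f h"
proof -
  assume a: "f \<in> Vphys" "g \<in> Vphys" "h \<in> Vphys"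
  have "ip f (\<lambda>x. g x + h x) = cnj (ip (\<lambda>x. g x + h x) f)" by (rule conj[OF V_add[OF a(2,3)] a(1)])
  also have "\<dots> = cnj (ip g f + ip h f)" using add1[OF a(2,3,1)] by simp
  also have "\<dots> = ip f g + ip f h" using conj[OF a(1,2)] conj[OF a(1,3)] by simp
  finally show ?thesis .
qed

lemma symA: "f \<in> Vphys \<Longrightarrow> g \<in> Vphys \<Longrightarrow> ip (opA i j f) g = ip f (opA i j g)"
  using SA unfolding symmetric_on_def by blast
lemma symB: "f \<in> Vphys \<Longrightarrow> g \<in> Vphys \<Longrightarrow> ip (opB i j f) g = ip f (opB i j g)"
  using SB unfolding symmetric_on_def by blast
lemma symC: "f \<in> Vphys \<Longrightarrow> g \<in> Vphys \<Longrightarrow> ip (opC i j f) g = ip f (opC i j g)"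
  using SC unfolding symmetric_on_def by blast

lemma orth_m:
  assumes "\<bar>m\<bar> \<le> int l" "\<bar>m'\<bar> \<le> int l'" "m \<noteq> m'"
  shows "ip (Psi l m n) (Psi l' m' n') = 0"
proof -
  have "ip (opA 1 2 (Psi l m n)) (Psi l' m' n') = ip (Psi l m n) (opA 1 2 (Psi l' m' n'))"
    by (rule symA[OF V_Psi V_Psi])
  hence "of_int m * ip (Psi l m n) (Psi l' m' n') = of_int m' * ip (Psi l m n) (Psi l' m' n')"
    unfolding psi_u_ops(1)[OF assms(1)] psi_u_ops(1)[OF assms(2)]
    by (simp add: smult1[OF V_Psi V_Psi] smult2[OF V_Psi V_Psi])
  hence "(of_int m - of_int m') * ip (Psi l m n) (Psi l' m' n') = 0" by (simp add: algebra_simps)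
  moreover have "(of_int m - of_int m' :: complex) \<noteq> 0" using assms(3) by simp
  ultimately show ?thesis by simp
qed

lemma orth_n:
  assumes "\<bar>n\<bar> \<le> int l" "\<bar>n'\<bar> \<le> int l'" "n \<noteq> n'"
  shows "ip (Psi l m n) (Psi l' m' n') = 0"
proof -
  have "ip (opB 1 2 (Psi l m n)) (Psi l' m' n') = ip (Psi l m n) (opB 1 2 (Psi l' m' n'))"
    by (rule symB[OF V_Psi V_Psi])
  hence "of_int n * ip (Psi l m n) (Psi l' m' n') = of_int n' * ip (Psi l m n) (Psi l' m' n')"
    unfolding psi_v_ops(1)[OF assms(1)] psi_v_ops(1)[OF assms(2)]
    by (simp add: smult1[OF V_Psi V_Psi] smult2[OF V_Psi V_Psi])
  hence "(of_int n - of_int n') * ip (Psi l m n) (Psi l' m' n') = 0" by (simp add: algebra_simps)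
  moreover have "(of_int n - of_int n' :: complex) \<noteq> 0" using assms(3) by simp
  ultimately show ?thesis by simp
qed

lemma memA:
  assumes "\<bar>m\<bar> \<le> int l"
  shows "opA 2 3 (Psi l m n) \<in> Vphys" "opA 3 1 (Psi l m n) \<in> Vphys"
proof -
  have e1: "opA 2 3 (Psi l m n) z + \<i> * opA 3 1 (Psi l m n) z = of_real (la l m) * Psi l (m+1) n z" for z
  proof -
    have "Lpu (Psi l m n) z = of_real (la l m) * Psi l (m+1) n z" using psi_u_ops(2)[OF assms] by simp
    thus ?thesis unfolding Lpu_def .
  qed
  have e2: "opA 2 3 (Psi l m n) z - \<i> * opA 3 1 (Psi l m n) z = of_real (lb l m) * Psi l (m-1) n z" for z
  proof -
    have "Lmu (Psi l m n) z = of_real (lb l m) * Psi l (m-1) n z" using psi_u_ops(3)[OF assms] by simp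
    thus ?thesis unfolding Lmu_def .
  qed
  have a: "opA 2 3 (Psi l m n) = (\<lambda>z. (of_real (la l m) / 2) * Psi l (m+1) n z + (of_real (lb l m) / 2) * Psi l (m-1) n z)"
  proof
    fix z
    have "opA 2 3 (Psi l m n) z = (of_real (la l m) * Psi l (m+1) n z + of_real (lb l m) * Psi l (m-1) n z) / 2"
      unfolding e1[symmetric] e2[symmetric] by simp
    thus "opA 2 3 (Psi l m n) z = (of_real (la l m) / 2) * Psi l (m+1) n z + (of_real (lb l m) / 2) * Psi l (m-1) n z"
      by (simp add: field_simps)
  qed
  have b: "opA 3 1 (Psi l m n) = (\<lambda>z. (- \<i> * of_real (la l m) / 2) * Psi l (m+1) n z + (\<i> * of_real (lb l m) / 2) * Psi l (m-1) n z)"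
  proof
    fix z
    have "opA 3 1 (Psi l m n) z = - \<i> * (of_real (la l m) * Psi l (m+1) n z - of_real (lb l m) * Psi l (m-1) n z) / 2"
      unfolding e1[symmetric] e2[symmetric] by (simp add: algebra_simps)
    thus "opA 3 1 (Psi l m n) z = (- \<i> * of_real (la l m) / 2) * Psi l (m+1) n z + (\<i> * of_real (lb l m) / 2) * Psi l (m-1) n z"
      by (simp add: field_simps)
  qed
  show "opA 2 3 (Psi l m n) \<in> Vphys" unfolding a by (intro V_add V_smult V_Psi)
  show "opA 3 1 (Psi l m n) \<in> Vphys" unfolding b by (intro V_add V_smult V_Psi)
qed

lemma memB:
  assumes "\<bar>n\<bar> \<le> int l"
  shows "opB 2 3 (Psi l m n) \<in> Vphys" "opB 3 1 (Psi l m n) \<in> Vphys"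
proof -
  have e1: "opB 2 3 (Psi l m n) z + \<i> * opB 3 1 (Psi l m n) z = of_real (la l n) * Psi l m (n+1) z" for z
  proof -
    have "Lpv (Psi l m n) z = of_real (la l n) * Psi l m (n+1) z" using psi_v_ops(2)[OF assms] by simp
    thus ?thesis unfolding Lpv_def .
  qed
  have e2: "opB 2 3 (Psi l m n) z - \<i> * opB 3 1 (Psi l m n) z = of_real (lb l n) * Psi l m (n-1) z" for z
  proof -
    have "Lmv (Psi l m n) z = of_real (lb l n) * Psi l m (n-1) z" using psi_v_ops(3)[OF assms] by simp
    thus ?thesis unfolding Lmv_def .
  qed
  have a: "opB 2 3 (Psi l m n) = (\<lambda>z. (of_real (la l n) / 2) * Psi l m (n+1) z + (of_real (lb l n) / 2) * Psi l m (n-1) z)"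
  proof
    fix z
    have "opB 2 3 (Psi l m n) z = (of_real (la l n) * Psi l m (n+1) z + of_real (lb l n) * Psi l m (n-1) z) / 2"
      unfolding e1[symmetric] e2[symmetric] by simp
    thus "opB 2 3 (Psi l m n) z = (of_real (la l n) / 2) * Psi l m (n+1) z + (of_real (lb l n) / 2) * Psi l m (n-1) z"
      by (simp add: field_simps)
  qed
  have b: "opB 3 1 (Psi l m n) = (\<lambda>z. (- \<i> * of_real (la l n) / 2) * Psi l m (n+1) z + (\<i> * of_real (lb l n) / 2) * Psi l m (n-1) z)"
  proof
    fix z
    have "opB 3 1 (Psi l m n) z = - \<i> * (of_real (la l n) * Psi l m (n+1) z - of_real (lb l n) * Psi l m (n-1) z) / 2"
      unfolding e1[symmetric] e2[symmetric] by (simp add: algebra_simps)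
    thus "opB 3 1 (Psi l m n) z = (- \<i> * of_real (la l n) / 2) * Psi l m (n+1) z + (\<i> * of_real (lb l n) / 2) * Psi l m (n-1) z"
      by (simp add: field_simps)
  qed
  show "opB 2 3 (Psi l m n) \<in> Vphys" unfolding a by (intro V_add V_smult V_Psi)
  show "opB 3 1 (Psi l m n) \<in> Vphys" unfolding b by (intro V_add V_smult V_Psi)
qed

lemma adj_gen:
  assumes f: "f \<in> Vphys" and g: "g \<in> Vphys"
    and af: "a f \<in> Vphys" and bf: "b f \<in> Vphys" and ag: "a g \<in> Vphys" and bg: "b g \<in> Vphys"
    and sa: "ip (a f) g = ip f (a g)" and sb: "ip (b f) g = ip f (b g)"
  shows "ip (\<lambda>z. a f z + \<i> * b f z) g = ip f (\<lambda>z. a g z - \<i> * b g z)"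
proof -
  have "ip (\<lambda>z. a f z + \<i> * b f z) g = ip (a f) g + ip (\<lambda>z. \<i> * b f z) g"
    by (rule add1[OF af V_smult[OF bf] g])
  also have "\<dots> = ip f (a g) + \<i> * ip f (b g)" using smult1[OF bf g] sa sb by simp
  also have "\<dots> = ip f (a g) + cnj (- \<i>) * ip f (b g)" by simp
  also have "\<dots> = ip f (a g) + ip f (\<lambda>z. (- \<i>) * b g z)"
    by (simp only: smult2[OF f bg])
  also have "\<dots> = ip f (\<lambda>z. a g z + (- \<i>) * b g z)"
    by (rule add2[OF f ag V_smult[OF bg], symmetric])
  also have "(\<lambda>z. a g z + (- \<i>) * b g z) = (\<lambda>z. a g z - \<i> * b g z)" by simp
  finally show ?thesis .
qed

lemma ladder_u:
  assumes "\<bar>m\<bar> \<le> int l" "\<bar>m'\<bar> \<le> int l'"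
  shows "of_real (la l m) * ip (Psi l (m+1) n) (Psi l' m' n') = of_real (lb l' m') * ip (Psi l m n) (Psi l' (m'-1) n')"
proof -
  have "ip (Lpu (Psi l m n)) (Psi l' m' n') = ip (Psi l m n) (Lmu (Psi l' m' n'))"
    unfolding Lpu_def Lmu_def
    by (rule adj_gen[where a = "opA 2 3" and b = "opA 3 1"])
       (auto intro: V_Psi memA assms symA)
  thus ?thesis unfolding psi_u_ops(2)[OF assms(1)] psi_u_ops(3)[OF assms(2)]
    by (simp add: smult1[OF V_Psi V_Psi] smult2[OF V_Psi V_Psi])
qed

lemma ladder_v:
  assumes "\<bar>n\<bar> \<le> int l" "\<bar>n'\<bar> \<le> int l'"
  shows "of_real (la l n) * ip (Psi l m (n+1)) (Psi l' m' n') = of_real (lb l' n') * ip (Psi l m n) (Psi l' m' (n'-1))"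
proof -
  have "ip (Lpv (Psi l m n)) (Psi l' m' n') = ip (Psi l m n) (Lmv (Psi l' m' n'))"
    unfolding Lpv_def Lmv_def
    by (rule adj_gen[where a = "opB 2 3" and b = "opB 3 1"])
       (auto intro: V_Psi memB assms symB)
  thus ?thesis unfolding psi_v_ops(2)[OF assms(1)] psi_v_ops(3)[OF assms(2)]
    by (simp add: smult1[OF V_Psi V_Psi] smult2[OF V_Psi V_Psi])
qed

end


lemma la_ll: "la l (int l) = 0" by (simp add: la_def)
lemma la_lb: "la l m = lb l (m+1)" by (simp add: la_def lb_def algebra_simps)
lemma lb_pos:
  assumes "0 < (int l' + m + 1) * (int l' - m)"
  shows "lb l' (m+1) > 0"
proof -
  have e: "(int l' + (m+1)) * (int l' - (m+1) + 1) = (int l' + m + 1) * (int l' - m)"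
    by (simp add: algebra_simps)
  have "0 < (of_int ((int l' + m + 1) * (int l' - m)) :: real)" using assms by (simp only: of_int_0_less_iff)
  thus ?thesis unfolding lb_def e by (rule real_sqrt_gt_zero)
qed

context ipctx
begin

lemma orth_l_lt:
  assumes "l < l'" "\<bar>m\<bar> \<le> int l" "\<bar>n\<bar> \<le> int l"
  shows "ip (Psi l m n) (Psi l' m n) = 0"
proof -
  have "\<forall>m. int l - m = int d \<longrightarrow> - int l \<le> m \<longrightarrow> ip (Psi l m n) (Psi l' m n) = 0" for d
  proof (induction d)
    case 0
    show ?case
    proof (intro allI impI)
      fix m assume m: "int l - m = int 0" "- int l \<le> m"
      hence mm: "m = int l" by simp
      have h: "of_real (la l (int l)) * ip (Psi l (int l+1) n) (Psi l' (int l+1) n) = of_real (lb l' (int l+1)) * ip (Psi l (int l) n) (Psi l' (int l+1-1) n)"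
        by (rule ladder_u) (use assms in auto)
      have p: "lb l' (int l + 1) > 0" by (rule lb_pos) (use assms in simp)
      show "ip (Psi l m n) (Psi l' m n) = 0" using h p unfolding mm la_ll by simp
    qed
  next
    case (Suc d)
    show ?case
    proof (intro allI impI)
      fix m assume m: "int l - m = int (Suc d)" "- int l \<le> m"
      have ih: "ip (Psi l (m+1) n) (Psi l' (m+1) n) = 0" using Suc.IH m by auto
      have h: "of_real (la l m) * ip (Psi l (m+1) n) (Psi l' (m+1) n) = of_real (lb l' (m+1)) * ip (Psi l m n) (Psi l' (m+1-1) n)"
        by (rule ladder_u) (use assms m in auto)
      have p: "lb l' (m + 1) > 0" by (rule lb_pos) (use assms m in auto)
      show "ip (Psi l m n) (Psi l' m n) = 0" using h p ih by simp
    qed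
  qed
  from this[of "nat (int l - m)"] show ?thesis using assms by auto
qed

lemma orth_l:
  assumes "l \<noteq> l'" "\<bar>m\<bar> \<le> int l" "\<bar>n\<bar> \<le> int l" "\<bar>m\<bar> \<le> int l'" "\<bar>n\<bar> \<le> int l'"
  shows "ip (Psi l m n) (Psi l' m n) = 0"
proof (cases "l < l'")
  case True thus ?thesis using orth_l_lt assms by blast
next
  case False
  hence "l' < l" using assms(1) by simp
  hence "ip (Psi l' m n) (Psi l m n) = 0" using orth_l_lt assms by blast
  thus ?thesis using conj[OF V_Psi V_Psi, of l' m n l m n] by simp
qed

lemma diag_m_step:
  assumes "\<bar>m\<bar> \<le> int l" "m < int l"
  shows "ip (Psi l (m+1) n) (Psi l (m+1) n) = ip (Psi l m n) (Psi l m n)"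
proof -
  have h: "of_real (la l m) * ip (Psi l (m+1) n) (Psi l (m+1) n) = of_real (lb l (m+1)) * ip (Psi l m n) (Psi l (m+1-1) n)"
    by (rule ladder_u) (use assms in auto)
  have p: "lb l (m + 1) > 0" by (rule lb_pos) (use assms in auto)
  show ?thesis using h p unfolding la_lb by simp
qed

lemma diag_n_step:
  assumes "\<bar>n\<bar> \<le> int l" "n < int l"
  shows "ip (Psi l m (n+1)) (Psi l m (n+1)) = ip (Psi l m n) (Psi l m n)"
proof -
  have h: "of_real (la l n) * ip (Psi l m (n+1)) (Psi l m (n+1)) = of_real (lb l (n+1)) * ip (Psi l m n) (Psi l m (n+1-1))"
    by (rule ladder_v) (use assms in auto)
  have p: "lb l (n + 1) > 0" by (rule lb_pos) (use assms in auto)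
  show ?thesis using h p unfolding la_lb by simp
qed

lemma diag_m:
  assumes "\<bar>m\<bar> \<le> int l"
  shows "ip (Psi l m n) (Psi l m n) = ip (Psi l (int l) n) (Psi l (int l) n)"
proof -
  have "\<forall>m. int l - m = int d \<longrightarrow> \<bar>m\<bar> \<le> int l \<longrightarrow> ip (Psi l m n) (Psi l m n) = ip (Psi l (int l) n) (Psi l (int l) n)" for d
  proof (induction d)
    case 0 thus ?case by auto
  next
    case (Suc d)
    show ?case
    proof (intro allI impI)
      fix m assume m: "int l - m = int (Suc d)" "\<bar>m\<bar> \<le> int l"
      have "ip (Psi l (m+1) n) (Psi l (m+1) n) = ip (Psi l (int l) n) (Psi l (int l) n)" using Suc.IH m by auto
      moreover have "ip (Psi l (m+1) n) (Psi l (m+1) n) = ip (Psi l m n) (Psi l m n)"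
        by (rule diag_m_step) (use m in auto)
      ultimately show "ip (Psi l m n) (Psi l m n) = ip (Psi l (int l) n) (Psi l (int l) n)" by simp
    qed
  qed
  from this[of "nat (int l - m)"] show ?thesis using assms by auto
qed

lemma diag_n:
  assumes "\<bar>n\<bar> \<le> int l"
  shows "ip (Psi l m n) (Psi l m n) = ip (Psi l m (int l)) (Psi l m (int l))"
proof -
  have "\<forall>n. int l - n = int d \<longrightarrow> \<bar>n\<bar> \<le> int l \<longrightarrow> ip (Psi l m n) (Psi l m n) = ip (Psi l m (int l)) (Psi l m (int l))" for d
  proof (induction d)
    case 0 thus ?case by auto
  next
    case (Suc d)
    show ?case
    proof (intro allI impI)
      fix n assume n: "int l - n = int (Suc d)" "\<bar>n\<bar> \<le> int l"
      have "ip (Psi l m (n+1)) (Psi l m (n+1)) = ip (Psi l m (int l)) (Psi l m (int l))" using Suc.IH n by auto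
      moreover have "ip (Psi l m (n+1)) (Psi l m (n+1)) = ip (Psi l m n) (Psi l m n)"
        by (rule diag_n_step) (use n in auto)
      ultimately show "ip (Psi l m n) (Psi l m n) = ip (Psi l m (int l)) (Psi l m (int l))" by simp
    qed
  qed
  from this[of "nat (int l - n)"] show ?thesis using assms by auto
qed

lemma diag:
  assumes "\<bar>m\<bar> \<le> int l" "\<bar>n\<bar> \<le> int l"
  shows "ip (Psi l m n) (Psi l m n) = ip (Psi l (int l) (int l)) (Psi l (int l) (int l))"
  using diag_m[OF assms(1), of n] diag_n[OF assms(2), of "int l"] by simp

definition E :: "nat \<Rightarrow> complex" where "E l = ip (Psi l (int l) (int l)) (Psi l (int l) (int l))"

lemma E_step: "E (Suc l) = of_real ((2*real l+3) / (2*real l+1)) * E l"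
proof -
  have s: "ip (opC 3 3 (Psi l (int l) (int l))) (Psi (Suc l) (int l) (int l)) = ip (Psi l (int l) (int l)) (opC 3 3 (Psi (Suc l) (int l) (int l)))"
    by (rule symC[OF V_Psi V_Psi])
  have o: "ip (Psi l (int l) (int l)) (Psi (Suc (Suc l)) (int l) (int l)) = 0"
    by (rule orth_l_lt) auto
  have L: "ip (opC 3 3 (Psi l (int l) (int l))) (Psi (Suc l) (int l) (int l)) =
     of_real ((2*real l+1) * k0 l / k1 l) * ip (Psi (Suc l) (int l) (int l)) (Psi (Suc l) (int l) (int l))"
    unfolding C33_top0 by (rule smult1[OF V_Psi V_Psi])
  have R: "ip (Psi l (int l) (int l)) (opC 3 3 (Psi (Suc l) (int l) (int l))) =
     of_real (k1 l / ((2*real l+3) * k0 l)) * E l"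
  proof -
    have "ip (Psi l (int l) (int l)) (opC 3 3 (Psi (Suc l) (int l) (int l))) =
      ip (Psi l (int l) (int l)) (\<lambda>z. of_real (k1 l / ((2*real l+3) * k0 l)) * Psi l (int l) (int l) z)
    + ip (Psi l (int l) (int l)) (\<lambda>z. of_real (k1 l / ((2*real l+3) * k2 l)) * Psi (Suc (Suc l)) (int l) (int l) z)"
      unfolding C33_top1 by (rule add2[OF V_Psi V_smult[OF V_Psi] V_smult[OF V_Psi]])
    also have "\<dots> = cnj (of_real (k1 l / ((2*real l+3) * k0 l))) * E l
       + cnj (of_real (k1 l / ((2*real l+3) * k2 l))) * ip (Psi l (int l) (int l)) (Psi (Suc (Suc l)) (int l) (int l))"
      unfolding E_def by (simp only: smult2[OF V_Psi V_Psi])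
    finally show ?thesis unfolding o by simp
  qed
  have D: "ip (Psi (Suc l) (int l) (int l)) (Psi (Suc l) (int l) (int l)) = E (Suc l)"
    unfolding E_def by (rule diag) auto
  have eq: "of_real ((2*real l+1) * k0 l / k1 l) * E (Suc l) = of_real (k1 l / ((2*real l+3) * k0 l)) * E l"
    using s L R D by simp
  have k: "k1 l = (2*real l+3) * k0 l" by (rule k1_k0)
  have kp: "k0 l > 0" using k_pos by auto
  define a where "a = 2*real l+1"
  have ap: "a > 0" unfolding a_def by simp
  have e3: "2*real l+3 = a + 2" unfolding a_def by simp
  have eq2: "of_real (a * k0 l / ((a+2) * k0 l)) * E (Suc l) = of_real ((a+2) * k0 l / ((a+2) * k0 l)) * E l"
    using eq unfolding k e3 a_def[symmetric] .
  have r1: "a * k0 l / ((a+2) * k0 l) = a / (a+2)" using kp by simp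
  have r2: "(a+2) * k0 l / ((a+2) * k0 l) = 1" using kp ap by simp
  have h: "of_real (a / (a+2)) * E (Suc l) = E l"
    using eq2 unfolding r1 r2 by simp
  have r3: "(a+2)/a * (a/(a+2)) = 1" using ap by simp
  have "E (Suc l) = of_real ((a+2)/a * (a/(a+2))) * E (Suc l)" unfolding r3 by simp
  also have "\<dots> = of_real ((a+2)/a) * (of_real (a / (a+2)) * E (Suc l))" by simp
  finally have "E (Suc l) = of_real ((a+2) / a) * E l" unfolding h .
  thus ?thesis unfolding a_def e3[unfolded a_def, symmetric] by simp
qed

lemma E_formula: "E l = of_real (2*real l+1) * E 0"
proof (induction l)
  case 0 thus ?case by simp
next
  case (Suc l)
  have "E (Suc l) = of_real ((2*real l+3) / (2*real l+1)) * (of_real (2*real l+1) * E 0)"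
    using E_step Suc by simp
  also have "\<dots> = of_real ((2*real l+3) / (2*real l+1) * (2*real l+1)) * E 0"
    by (simp only: of_real_mult mult.assoc)
  also have "(2*real l+3) / (2*real l+1) * (2*real l+1) = 2*real (Suc l)+1"
    by simp
  finally show ?case .
qed

lemma Psi000_nz: "Psi 0 0 0 \<noteq> (\<lambda>x. 0)"
proof
  assume "Psi 0 0 0 = (\<lambda>x. 0)"
  hence "Psi 0 (int 0) (int 0) (0, 0) = 0" by simp
  moreover have "Psi 0 (int 0) (int 0) (0, 0) = of_real (k0 0)"
    unfolding Psi_top0 by (simp add: nsq_def G00)
  moreover have "k0 0 > 0" using k_pos by auto
  ultimately show False by simp
qed

lemma E0_real: "E 0 = of_real (Re (E 0))" "Re (E 0) > 0"
proof -
  have c: "E 0 = cnj (E 0)" unfolding E_def using conj[OF V_Psi V_Psi, of 0 0 0 0 0 0] by simp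
  hence "Im (E 0) = 0" by (metis cnj.simps(2) neg_equal_zero)
  thus "E 0 = of_real (Re (E 0))" by (simp add: complex_eq_iff)
  show "Re (E 0) > 0" unfolding E_def using pos[OF V_Psi Psi000_nz] by simp
qed

theorem main:
  "\<exists>r::real. r > 0 \<and>
    (\<forall>l m n l' m' n'. (l,m,n) \<in> valid_idx \<longrightarrow> (l',m',n') \<in> valid_idx \<longrightarrow>
       ip (Psi l m n) (Psi l' m' n') =
         (if l = l' \<and> m = m' \<and> n = n' then complex_of_real (r * (2 * real l + 1)) else 0))"
proof (intro exI conjI allI impI)
  show "Re (E 0) > 0" by (rule E0_real(2))
  fix l m n l' m' n'
  assume v: "(l,m,n) \<in> valid_idx" "(l',m',n') \<in> valid_idx"
  hence v1: "\<bar>m\<bar> \<le> int l" "\<bar>n\<bar> \<le> int l" and v2: "\<bar>m'\<bar> \<le> int l'" "\<bar>n'\<bar> \<le> int l'"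
    by (auto simp: valid_idx_def)
  show "ip (Psi l m n) (Psi l' m' n') =
         (if l = l' \<and> m = m' \<and> n = n' then complex_of_real (Re (E 0) * (2 * real l + 1)) else 0)"
  proof (cases "l = l' \<and> m = m' \<and> n = n'")
    case True
    have "ip (Psi l m n) (Psi l m n) = E l" unfolding E_def by (rule diag[OF v1])
    also have "\<dots> = of_real (2*real l+1) * of_real (Re (E 0))" using E_formula E0_real(1) by metis
    finally show ?thesis using True by (simp add: mult.commute)
  next
    case False
    show ?thesis
    proof (cases "m = m'")
      case mm: True
      show ?thesis
      proof (cases "n = n'")
        case nn: True
        hence "l \<noteq> l'" using False mm by auto
        thus ?thesis using orth_l[of l l' m n] v1 v2 mm nn False by auto
      next
        case False
        thus ?thesis using orth_n[OF v1(2) v2(2)] \<open>\<not> (l = l' \<and> m = m' \<and> n = n')\<close> by auto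
      qed
    next
      case False
      thus ?thesis using orth_m[OF v1(1) v2(1)] by auto
    qed
  qed
qed

end


theorem mainTheorem7:
  fixes ip :: "phfun \<Rightarrow> phfun \<Rightarrow> complex"
  assumes "is_inner_product_on Vphys ip"
    and "\<And>i j. symmetric_on Vphys ip (opA i j)"
    and "\<And>i j. symmetric_on Vphys ip (opB i j)"
    and "\<And>i j. symmetric_on Vphys ip (opC i j)"
  shows "\<exists>r::real. r > 0 \<and>
    (\<forall>l m n l' m' n'. (l,m,n) \<in> valid_idx \<longrightarrow> (l',m',n') \<in> valid_idx \<longrightarrow>
       ip (Psi l m n) (Psi l' m' n') =
         (if l = l' \<and> m = m' \<and> n = n' then complex_of_real (r * (2 * real l + 1)) else 0))"
proof -
  interpret I: ipctx ip
    by unfold_locales (use assms in auto)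
  show ?thesis by (rule I.main)
qed

end
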